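(* Let $\mathcal G$ be a second countable ample groupoid whose unit space $\mathcal G^{(0)}$ is Hausdorff, let $\ell$ be a field, and let $\nu:\mathcal G^{(2)}\to\mathcal U(\ell)$ be a normalized continuous $2$-cocycle. Assume that $\mathcal G$ is effective and minimal, that for every nonzero $f\in\mathcal A(\mathcal G,\nu)$ the support $\{\xi:f(\xi)\neq0\}$ has nonempty interior, and that for every nonempty compact open subset $L\subset\mathcal G^{(0)}$ the idempotent $\chi_L\in\mathcal A(\mathcal G,\nu)$ is infinite. Then $\mathcal A(\mathcal G,\nu)$ is simple purely infinite.
   Context: An ample groupoid is an étale topological groupoid (possibly non-Hausdorff) whose topology has a basis of compact open slices (open sets on which domain $d$ and range are injective). $\mathcal G$ is effective if the interior of its isotropy is $\mathcal G^{(0)}$, minimal if every orbit in $\mathcal G^{(0)}$ is dense. A continuous $2$-cocycle is a locally constant $\nu:\mathcal G^{(2)}\to\mathcal U(\ell)$ with $\nu(\xi_1,\xi_2)\nu(\xi_1\xi_2,\xi_3)=\nu(\xi_1,\xi_2\xi_3)\nu(\xi_2,\xi_3)$; normalized means $\nu(\xi,d(\xi))=\nu(d(\xi^{-1}),\xi)=1$. The twisted Steinberg algebra $\mathcal A(\mathcal G,\nu)$ is the span of characteristic functions of compact open slices (equivalently of functions continuous and compactly supported on a Hausdorff open subset and zero elsewhere) with product $(f\star_\nu g)(\xi)=\sum_{\xi=\xi_1\xi_2}\nu(\xi_1,\xi_2)f(\xi_1)g(\xi_2)$. An idempotent $p$ is infinite if it is Murray–von Neumann equivalent to a proper subidempotent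 of itself. A ring is simple purely infinite if it is simple and every nonzero right ideal contains an infinite idempotent. *)

theory Defs
  imports "HOL-Analysis.Analysis"
begin

record 'g groupoid =
  gcar :: "'g set"
  gunits :: "'g set"
  gd :: "'g \<Rightarrow> 'g"
  gr :: "'g \<Rightarrow> 'g"
  gmul :: "'g \<Rightarrow> 'g \<Rightarrow> 'g"
  ginv :: "'g \<Rightarrow> 'g"

definition composable :: "'g groupoid \<Rightarrow> ('g \<times> 'g) set" where
  "composable \<Gamma> = {(a, b). a \<in> gcar \<Gamma> \<and> b \<in> gcar \<Gamma> \<and> gd \<Gamma> a = gr \<Gamma> b}"

definition is_groupoid :: "'g groupoid \<Rightarrow> bool" where
  "is_groupoid \<Gamma> \<longleftrightarrow>
     gunits \<Gamma> \<subseteq> gcar \<Gamma>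
   \<and> (\<forall>a\<in>gcar \<Gamma>. gd \<Gamma> a \<in> gunits \<Gamma> \<and> gr \<Gamma> a \<in> gunits \<Gamma>)
   \<and> (\<forall>u\<in>gunits \<Gamma>. gd \<Gamma> u = u \<and> gr \<Gamma> u = u)
   \<and> (\<forall>a\<in>gcar \<Gamma>. \<forall>b\<in>gcar \<Gamma>. gd \<Gamma> a = gr \<Gamma> b \<longrightarrow>
         gmul \<Gamma> a b \<in> gcar \<Gamma> \<and> gd \<Gamma> (gmul \<Gamma> a b) = gd \<Gamma> b
         \<and> gr \<Gamma> (gmul \<Gamma> a b) = gr \<Gamma> a)
   \<and> (\<forall>a\<in>gcar \<Gamma>. \<forall>b\<in>gcar \<Gamma>. \<forall>c\<in>gcar \<Gamma>.
         gd \<Gamma> a = gr \<Gamma> b \<longrightarrow> gd \<Gamma> b = gr \<Gamma> c \<longrightarrow>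
         gmul \<Gamma> (gmul \<Gamma> a b) c = gmul \<Gamma> a (gmul \<Gamma> b c))
   \<and> (\<forall>a\<in>gcar \<Gamma>. gmul \<Gamma> (gr \<Gamma> a) a = a \<and> gmul \<Gamma> a (gd \<Gamma> a) = a)
   \<and> (\<forall>a\<in>gcar \<Gamma>. ginv \<Gamma> a \<in> gcar \<Gamma> \<and> gd \<Gamma> (ginv \<Gamma> a) = gr \<Gamma> a
         \<and> gr \<Gamma> (ginv \<Gamma> a) = gd \<Gamma> a
         \<and> gmul \<Gamma> a (ginv \<Gamma> a) = gr \<Gamma> a \<and> gmul \<Gamma> (ginv \<Gamma> a) a = gd \<Gamma> a)"

definition topological_groupoid :: "'g topology \<Rightarrow> 'g groupoid \<Rightarrow> bool" where
  "topological_groupoid X \<Gamma> \<longleftrightarrow>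
     is_groupoid \<Gamma> \<and> topspace X = gcar \<Gamma>
   \<and> continuous_map X X (ginv \<Gamma>)
   \<and> continuous_map (subtopology (prod_topology X X) (composable \<Gamma>)) X
        (\<lambda>p. gmul \<Gamma> (fst p) (snd p))"

definition local_homeomorphism :: "'g topology \<Rightarrow> ('g \<Rightarrow> 'g) \<Rightarrow> bool" where
  "local_homeomorphism X f \<longleftrightarrow>
     (\<forall>x\<in>topspace X. \<exists>U. openin X U \<and> x \<in> U \<and> openin X (f ` U)
        \<and> homeomorphic_map (subtopology X U) (subtopology X (f ` U)) f)"

definition etale_groupoid :: "'g topology \<Rightarrow> 'g groupoid \<Rightarrow> bool" where
  "etale_groupoid X \<Gamma> \<longleftrightarrow> topological_groupoid X \<Gamma> \<and> local_homeomorphism X (gd \<Gamma>)"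

definition slice :: "'g topology \<Rightarrow> 'g groupoid \<Rightarrow> 'g set \<Rightarrow> bool" where
  "slice X \<Gamma> U \<longleftrightarrow> openin X U \<and> inj_on (gd \<Gamma>) U \<and> inj_on (gr \<Gamma>) U"

definition compact_open_slice :: "'g topology \<Rightarrow> 'g groupoid \<Rightarrow> 'g set \<Rightarrow> bool" where
  "compact_open_slice X \<Gamma> U \<longleftrightarrow> slice X \<Gamma> U \<and> compactin X U"

definition ample_groupoid :: "'g topology \<Rightarrow> 'g groupoid \<Rightarrow> bool" where
  "ample_groupoid X \<Gamma> \<longleftrightarrow> etale_groupoid X \<Gamma>
     \<and> (\<forall>W. openin X W \<longrightarrow> (\<forall>x\<in>W. \<exists>U. compact_open_slice X \<Gamma> U \<and> x \<in> U \<and> U \<subseteq> W))"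

definition isotropy :: "'g groupoid \<Rightarrow> 'g set" where
  "isotropy \<Gamma> = {a \<in> gcar \<Gamma>. gd \<Gamma> a = gr \<Gamma> a}"

definition effective :: "'g topology \<Rightarrow> 'g groupoid \<Rightarrow> bool" where
  "effective X \<Gamma> \<longleftrightarrow> X interior_of (isotropy \<Gamma>) = gunits \<Gamma>"

definition orbit :: "'g groupoid \<Rightarrow> 'g \<Rightarrow> 'g set" where
  "orbit \<Gamma> u = {gr \<Gamma> a | a. a \<in> gcar \<Gamma> \<and> gd \<Gamma> a = u}"

definition minimal :: "'g topology \<Rightarrow> 'g groupoid \<Rightarrow> bool" where
  "minimal X \<Gamma> \<longleftrightarrow>
     (\<forall>u\<in>gunits \<Gamma>. (subtopology X (gunits \<Gamma>)) closure_of (orbit \<Gamma> u) = gunits \<Gamma>)"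

text \<open>Values in the unit group of the field, i.e. nonzero; locally constant on G^(2)
  with the relative product topology.\<close>
definition continuous_2_cocycle ::
  "'g topology \<Rightarrow> 'g groupoid \<Rightarrow> ('g \<Rightarrow> 'g \<Rightarrow> 'k::field) \<Rightarrow> bool" where
  "continuous_2_cocycle X \<Gamma> \<nu> \<longleftrightarrow>
     (\<forall>(a, b)\<in>composable \<Gamma>. \<nu> a b \<noteq> 0)
   \<and> (\<forall>p\<in>composable \<Gamma>. \<exists>W. openin (subtopology (prod_topology X X) (composable \<Gamma>)) W
        \<and> p \<in> W \<and> (\<forall>q\<in>W. \<nu> (fst q) (snd q) = \<nu> (fst p) (snd p)))
   \<and> (\<forall>a\<in>gcar \<Gamma>. \<forall>b\<in>gcar \<Gamma>. \<forall>c\<in>gcar \<Gamma>.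
        gd \<Gamma> a = gr \<Gamma> b \<longrightarrow> gd \<Gamma> b = gr \<Gamma> c \<longrightarrow>
        \<nu> a b * \<nu> (gmul \<Gamma> a b) c = \<nu> a (gmul \<Gamma> b c) * \<nu> b c)"

definition normalized_cocycle :: "'g groupoid \<Rightarrow> ('g \<Rightarrow> 'g \<Rightarrow> 'k::field) \<Rightarrow> bool" where
  "normalized_cocycle \<Gamma> \<nu> \<longleftrightarrow>
     (\<forall>a\<in>gcar \<Gamma>. \<nu> a (gd \<Gamma> a) = 1 \<and> \<nu> (gd \<Gamma> (ginv \<Gamma> a)) a = 1)"

text \<open>As a set, A(G,nu) does not depend on nu; nu is an argument only to fix the field.\<close>
definition steinberg_algebra ::
  "'g topology \<Rightarrow> 'g groupoid \<Rightarrow> ('g \<Rightarrow> 'g \<Rightarrow> 'k::field) \<Rightarrow> ('g \<Rightarrow> 'k) set" where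
  "steinberg_algebra X \<Gamma> \<nu> =
     {f. \<exists>(n::nat) c U. (\<forall>i<n. compact_open_slice X \<Gamma> (U i))
          \<and> f = (\<lambda>x. \<Sum>i<n. if x \<in> U i then c i else 0)}"

text \<open>Twisted convolution; the sum runs over the (finite, for algebra elements)
  set of factorisations x = a b with nonzero contributions.\<close>
definition twisted_conv ::
  "'g groupoid \<Rightarrow> ('g \<Rightarrow> 'g \<Rightarrow> 'k::field) \<Rightarrow> ('g \<Rightarrow> 'k) \<Rightarrow> ('g \<Rightarrow> 'k) \<Rightarrow> 'g \<Rightarrow> 'k" where
  "twisted_conv \<Gamma> \<nu> f g x =
     (\<Sum>(a, b)\<in>{(a, b). (a, b) \<in> composable \<Gamma> \<and> gmul \<Gamma> a b = x \<and> f a \<noteq> 0 \<and> g b \<noteq> 0}.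
        \<nu> a b * f a * g b)"

definition char_fun :: "'g set \<Rightarrow> 'g \<Rightarrow> 'k::field" where
  "char_fun L = (\<lambda>x. if x \<in> L then 1 else 0)"

section \<open>Ring-theoretic notions, for a (non-unital) ring given by a carrier set
  of functions with pointwise addition and a multiplication\<close>

definition additive_subgroup :: "('g \<Rightarrow> 'k::field) set \<Rightarrow> bool" where
  "additive_subgroup I \<longleftrightarrow> (\<lambda>_. 0) \<in> I \<and> (\<forall>f\<in>I. \<forall>g\<in>I. (\<lambda>x. f x - g x) \<in> I)"

definition right_ideal ::
  "('g \<Rightarrow> 'k::field) set \<Rightarrow> (('g \<Rightarrow> 'k) \<Rightarrow> ('g \<Rightarrow> 'k) \<Rightarrow> ('g \<Rightarrow> 'k)) \<Rightarrow> ('g \<Rightarrow> 'k) set \<Rightarrow> bool" where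
  "right_ideal A m I \<longleftrightarrow> I \<subseteq> A \<and> additive_subgroup I \<and> (\<forall>f\<in>I. \<forall>a\<in>A. m f a \<in> I)"

definition two_sided_ideal ::
  "('g \<Rightarrow> 'k::field) set \<Rightarrow> (('g \<Rightarrow> 'k) \<Rightarrow> ('g \<Rightarrow> 'k) \<Rightarrow> ('g \<Rightarrow> 'k)) \<Rightarrow> ('g \<Rightarrow> 'k) set \<Rightarrow> bool" where
  "two_sided_ideal A m I \<longleftrightarrow> right_ideal A m I \<and> (\<forall>f\<in>I. \<forall>a\<in>A. m a f \<in> I)"

definition simple_ring ::
  "('g \<Rightarrow> 'k::field) set \<Rightarrow> (('g \<Rightarrow> 'k) \<Rightarrow> ('g \<Rightarrow> 'k) \<Rightarrow> ('g \<Rightarrow> 'k)) \<Rightarrow> bool" where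
  "simple_ring A m \<longleftrightarrow> (\<exists>a\<in>A. \<exists>b\<in>A. m a b \<noteq> (\<lambda>_. 0))
     \<and> (\<forall>I. two_sided_ideal A m I \<longrightarrow> I = {\<lambda>_. 0} \<or> I = A)"

definition idempotent ::
  "('g \<Rightarrow> 'k::field) set \<Rightarrow> (('g \<Rightarrow> 'k) \<Rightarrow> ('g \<Rightarrow> 'k) \<Rightarrow> ('g \<Rightarrow> 'k)) \<Rightarrow> ('g \<Rightarrow> 'k) \<Rightarrow> bool" where
  "idempotent A m p \<longleftrightarrow> p \<in> A \<and> m p p = p"

definition mvn_equiv ::
  "('g \<Rightarrow> 'k::field) set \<Rightarrow> (('g \<Rightarrow> 'k) \<Rightarrow> ('g \<Rightarrow> 'k) \<Rightarrow> ('g \<Rightarrow> 'k)) \<Rightarrow> ('g \<Rightarrow> 'k) \<Rightarrow> ('g \<Rightarrow> 'k) \<Rightarrow> bool" where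
  "mvn_equiv A m p q \<longleftrightarrow> (\<exists>x\<in>A. \<exists>y\<in>A.
       m (m p x) q = x \<and> m (m q y) p = y \<and> m x y = p \<and> m y x = q)"

definition subidempotent ::
  "('g \<Rightarrow> 'k::field) set \<Rightarrow> (('g \<Rightarrow> 'k) \<Rightarrow> ('g \<Rightarrow> 'k) \<Rightarrow> ('g \<Rightarrow> 'k)) \<Rightarrow> ('g \<Rightarrow> 'k) \<Rightarrow> ('g \<Rightarrow> 'k) \<Rightarrow> bool" where
  "subidempotent A m q p \<longleftrightarrow> idempotent A m q \<and> m p q = q \<and> m q p = q"

definition infinite_idempotent ::
  "('g \<Rightarrow> 'k::field) set \<Rightarrow> (('g \<Rightarrow> 'k) \<Rightarrow> ('g \<Rightarrow> 'k) \<Rightarrow> ('g \<Rightarrow> 'k)) \<Rightarrow> ('g \<Rightarrow> 'k) \<Rightarrow> bool" where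
  "infinite_idempotent A m p \<longleftrightarrow> idempotent A m p
     \<and> (\<exists>q. subidempotent A m q p \<and> q \<noteq> p \<and> mvn_equiv A m p q)"

definition simple_purely_infinite ::
  "('g \<Rightarrow> 'k::field) set \<Rightarrow> (('g \<Rightarrow> 'k) \<Rightarrow> ('g \<Rightarrow> 'k) \<Rightarrow> ('g \<Rightarrow> 'k)) \<Rightarrow> bool" where
  "simple_purely_infinite A m \<longleftrightarrow> simple_ring A m
     \<and> (\<forall>I. right_ideal A m I \<and> I \<noteq> {\<lambda>_. 0} \<longrightarrow> (\<exists>p\<in>I. infinite_idempotent A m p))"

end

theory Submission
  imports Defs
begin

locale SA =
  fixes X :: "'g topology" and \<Gamma> :: "'g groupoid" and \<nu> :: "'g \<Rightarrow> 'g \<Rightarrow> 'k::field"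
  assumes ample: "ample_groupoid X \<Gamma>"
    and units_H: "Hausdorff_space (subtopology X (gunits \<Gamma>))"
    and cocycle: "continuous_2_cocycle X \<Gamma> \<nu>"
    and normalized: "normalized_cocycle \<Gamma> \<nu>"
    and eff: "effective X \<Gamma>"
begin

abbreviation "G \<equiv> gcar \<Gamma>"
abbreviation "G0 \<equiv> gunits \<Gamma>"
abbreviation "dm \<equiv> gd \<Gamma>"
abbreviation "rg \<equiv> gr \<Gamma>"
abbreviation "mul \<equiv> gmul \<Gamma>"
abbreviation "iv \<equiv> ginv \<Gamma>"
abbreviation "cv \<equiv> twisted_conv \<Gamma> \<nu>"
abbreviation "A \<equiv> steinberg_algebra X \<Gamma> \<nu>"

lemma grpd: "is_groupoid \<Gamma>"
  using ample unfolding ample_groupoid_def etale_groupoid_def topological_groupoid_def by blast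

lemma G0_sub: "G0 \<subseteq> G" using grpd unfolding is_groupoid_def by blast
lemma dm_G0[simp]: "a \<in> G \<Longrightarrow> dm a \<in> G0" using grpd unfolding is_groupoid_def by blast
lemma rg_G0[simp]: "a \<in> G \<Longrightarrow> rg a \<in> G0" using grpd unfolding is_groupoid_def by blast
lemma G0_G[simp]: "u \<in> G0 \<Longrightarrow> u \<in> G" using G0_sub by blast
lemma dm_G[simp]: "a \<in> G \<Longrightarrow> dm a \<in> G" by simp
lemma rg_G[simp]: "a \<in> G \<Longrightarrow> rg a \<in> G" by simp
lemma dm_unit[simp]: "u \<in> G0 \<Longrightarrow> dm u = u" using grpd unfolding is_groupoid_def by blast
lemma rg_unit[simp]: "u \<in> G0 \<Longrightarrow> rg u = u" using grpd unfolding is_groupoid_def by blast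
lemma mul_G[simp]: "a \<in> G \<Longrightarrow> b \<in> G \<Longrightarrow> dm a = rg b \<Longrightarrow> mul a b \<in> G"
  using grpd unfolding is_groupoid_def by blast
lemma dm_mul[simp]: "a \<in> G \<Longrightarrow> b \<in> G \<Longrightarrow> dm a = rg b \<Longrightarrow> dm (mul a b) = dm b"
  using grpd unfolding is_groupoid_def by blast
lemma rg_mul[simp]: "a \<in> G \<Longrightarrow> b \<in> G \<Longrightarrow> dm a = rg b \<Longrightarrow> rg (mul a b) = rg a"
  using grpd unfolding is_groupoid_def by blast
lemma mul_assoc: "a \<in> G \<Longrightarrow> b \<in> G \<Longrightarrow> c \<in> G \<Longrightarrow> dm a = rg b \<Longrightarrow> dm b = rg c \<Longrightarrow>
   mul (mul a b) c = mul a (mul b c)"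
  using grpd unfolding is_groupoid_def by blast
lemma mul_rg[simp]: "a \<in> G \<Longrightarrow> mul (rg a) a = a" using grpd unfolding is_groupoid_def by blast
lemma mul_dm[simp]: "a \<in> G \<Longrightarrow> mul a (dm a) = a" using grpd unfolding is_groupoid_def by blast
lemma iv_G[simp]: "a \<in> G \<Longrightarrow> iv a \<in> G" using grpd unfolding is_groupoid_def by blast
lemma dm_iv[simp]: "a \<in> G \<Longrightarrow> dm (iv a) = rg a" using grpd unfolding is_groupoid_def by blast
lemma rg_iv[simp]: "a \<in> G \<Longrightarrow> rg (iv a) = dm a" using grpd unfolding is_groupoid_def by blast
lemma mul_iv1[simp]: "a \<in> G \<Longrightarrow> mul a (iv a) = rg a" using grpd unfolding is_groupoid_def by blast
lemma mul_iv2[simp]: "a \<in> G \<Longrightarrow> mul (iv a) a = dm a" using grpd unfolding is_groupoid_def by blast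

lemma mul_unit_left: "u \<in> G0 \<Longrightarrow> b \<in> G \<Longrightarrow> u = rg b \<Longrightarrow> mul u b = b" by simp
lemma cancel_left: assumes "a \<in> G" "b \<in> G" "b' \<in> G" "dm a = rg b" "dm a = rg b'" "mul a b = mul a b'"
  shows "b = b'"
proof -
  have "b = mul (mul (iv a) a) b" using assms by simp
  also have "\<dots> = mul (iv a) (mul a b)" using assms by (intro mul_assoc) auto
  also have "\<dots> = mul (iv a) (mul a b')" using assms by simp
  also have "\<dots> = mul (mul (iv a) a) b'" using assms by (intro mul_assoc[symmetric]) auto
  also have "\<dots> = b'" using assms by (metis mul_iv2 mul_rg)
  finally show ?thesis .
qed
lemma cancel_right: assumes "a \<in> G" "a' \<in> G" "b \<in> G" "dm a = rg b" "dm a' = rg b" "mul a b = mul a' b"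
  shows "a = a'"
proof -
  have "a = mul a (mul b (iv b))" using assms by (metis mul_iv1 mul_dm)
  also have "\<dots> = mul (mul a b) (iv b)" using assms by (intro mul_assoc[symmetric]) auto
  also have "\<dots> = mul (mul a' b) (iv b)" using assms by simp
  also have "\<dots> = mul a' (mul b (iv b))" using assms by (intro mul_assoc) auto
  also have "\<dots> = a'" using assms by (metis mul_iv1 mul_dm)
  finally show ?thesis .
qed
lemma iv_iv[simp]: assumes "a \<in> G" shows "iv (iv a) = a"
proof -
  have "mul (iv a) (iv (iv a)) = mul (iv a) a" using assms by simp
  thus ?thesis using assms cancel_left[of "iv a" "iv (iv a)" a] by simp
qed
lemma unit_mul_eq: "a \<in> G0 \<Longrightarrow> b \<in> G \<Longrightarrow> a = rg b \<Longrightarrow> mul a b = b" by simp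

lemma nu_nz: "a \<in> G \<Longrightarrow> b \<in> G \<Longrightarrow> dm a = rg b \<Longrightarrow> \<nu> a b \<noteq> 0"
  using cocycle unfolding continuous_2_cocycle_def composable_def by auto
lemma nu_dm[simp]: "a \<in> G \<Longrightarrow> \<nu> a (dm a) = 1" using normalized unfolding normalized_cocycle_def by blast
lemma nu_rg[simp]: "a \<in> G \<Longrightarrow> \<nu> (rg a) a = 1" using normalized unfolding normalized_cocycle_def
  by (metis dm_iv)
lemma nu_cocycle: "a \<in> G \<Longrightarrow> b \<in> G \<Longrightarrow> c \<in> G \<Longrightarrow> dm a = rg b \<Longrightarrow> dm b = rg c \<Longrightarrow>
   \<nu> a b * \<nu> (mul a b) c = \<nu> a (mul b c) * \<nu> b c"
  using cocycle unfolding continuous_2_cocycle_def by blast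


lemma conv_unit_left:
  assumes "\<And>x. \<phi> x \<noteq> 0 \<Longrightarrow> x \<in> G0"
  shows "cv \<phi> h z = (if z \<in> G then \<phi> (rg z) * h z else 0)"
proof -
  let ?S = "{(a, b). (a, b) \<in> composable \<Gamma> \<and> mul a b = z \<and> \<phi> a \<noteq> 0 \<and> h b \<noteq> 0}"
  have S: "?S = (if z \<in> G \<and> \<phi> (rg z) \<noteq> 0 \<and> h z \<noteq> 0 then {(rg z, z)} else {})"
  proof (rule set_eqI, clarify)
    fix a b
    show "((a, b) \<in> ?S) = ((a, b) \<in> (if z \<in> G \<and> \<phi> (rg z) \<noteq> 0 \<and> h z \<noteq> 0 then {(rg z, z)} else {}))"
    proof
      assume ab: "(a, b) \<in> ?S"
      hence a0: "a \<in> G0" using assms by auto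
      from ab have "b \<in> G" "dm a = rg b" "mul a b = z" by (auto simp: composable_def)
      hence "b = z" "a = rg z" using a0 by auto
      thus "(a, b) \<in> (if z \<in> G \<and> \<phi> (rg z) \<noteq> 0 \<and> h z \<noteq> 0 then {(rg z, z)} else {})"
        using ab \<open>b \<in> G\<close> by auto
    qed (auto split: if_splits simp: composable_def)
  qed
  show ?thesis unfolding twisted_conv_def S by auto
qed

lemma conv_unit_right:
  assumes "\<And>x. \<phi> x \<noteq> 0 \<Longrightarrow> x \<in> G0"
  shows "cv h \<phi> z = (if z \<in> G then h z * \<phi> (dm z) else 0)"
proof -
  let ?S = "{(a, b). (a, b) \<in> composable \<Gamma> \<and> mul a b = z \<and> h a \<noteq> 0 \<and> \<phi> b \<noteq> 0}"
  have S: "?S = (if z \<in> G \<and> \<phi> (dm z) \<noteq> 0 \<and> h z \<noteq> 0 then {(z, dm z)} else {})"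
  proof (rule set_eqI, clarify)
    fix a b
    show "((a, b) \<in> ?S) = ((a, b) \<in> (if z \<in> G \<and> \<phi> (dm z) \<noteq> 0 \<and> h z \<noteq> 0 then {(z, dm z)} else {}))"
    proof
      assume ab: "(a, b) \<in> ?S"
      hence b0: "b \<in> G0" using assms by auto
      from ab have "a \<in> G" "dm a = rg b" "mul a b = z" by (auto simp: composable_def)
      hence "a = z" "b = dm z" using b0 by (metis mul_dm rg_unit)+
      thus "(a, b) \<in> (if z \<in> G \<and> \<phi> (dm z) \<noteq> 0 \<and> h z \<noteq> 0 then {(z, dm z)} else {})"
        using ab \<open>a \<in> G\<close> by auto
    qed (auto split: if_splits simp: composable_def)
  qed
  show ?thesis unfolding twisted_conv_def S by (auto simp: mult.commute)
qed

end

definition cchar :: "'k \<Rightarrow> 'g set \<Rightarrow> 'g \<Rightarrow> 'k::zero" where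
  "cchar c K x = (if x \<in> K then c else 0)"

context SA begin

definition sec :: "'g set \<Rightarrow> 'g \<Rightarrow> 'g" where
  "sec B v = (THE b. b \<in> B \<and> rg b = v)"

lemma sec: assumes "inj_on rg B" "b \<in> B" shows "sec B (rg b) = b"
  unfolding sec_def using assms by (auto intro!: the_equality dest: inj_onD)

lemma sec_in: assumes "inj_on rg B" "v \<in> rg ` B" shows "sec B v \<in> B" "rg (sec B v) = v"
  using assms sec by auto

lemma conv_slice_right:
  assumes B: "B \<subseteq> G" "inj_on rg B"
  shows "cv f (cchar 1 (iv ` B)) z = (if z \<in> G \<and> dm z \<in> rg ` B then
      \<nu> (mul z (sec B (dm z))) (iv (sec B (dm z))) * f (mul z (sec B (dm z))) else 0)"
proof -
  let ?S = "{(a, c). (a, c) \<in> composable \<Gamma> \<and> mul a c = z \<and> f a \<noteq> 0 \<and> cchar 1 (iv ` B) c \<noteq> (0::'k)}"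
  define b where "b = sec B (dm z)"
  have S: "?S = (if z \<in> G \<and> dm z \<in> rg ` B \<and> f (mul z b) \<noteq> 0 then {(mul z b, iv b)} else {})"
  proof (rule set_eqI, clarify)
    fix a c
    show "((a, c) \<in> ?S) = ((a, c) \<in> (if z \<in> G \<and> dm z \<in> rg ` B \<and> f (mul z b) \<noteq> 0 then {(mul z b, iv b)} else {}))"
    proof
      assume ac: "(a, c) \<in> ?S"
      then obtain b' where b': "b' \<in> B" "c = iv b'" by (auto simp: cchar_def split: if_splits)
      have b'G: "b' \<in> G" using b' B by auto
      from ac have aG: "a \<in> G" "dm a = rg c" "mul a c = z" by (auto simp: composable_def)
      hence zG: "z \<in> G" using b'G b' by auto
      have dz: "dm z = rg b'" using aG b' b'G by auto
      hence bb: "b = b'" unfolding b_def using sec[OF B(2) b'(1)] by simp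
      have "mul z b' = mul (mul a (iv b')) b'" using aG b' by simp
      also have "\<dots> = mul a (mul (iv b') b')" using aG b' b'G by (intro mul_assoc) auto
      also have "\<dots> = a" using aG b' b'G by (metis mul_iv2 mul_dm rg_iv)
      finally have "a = mul z b" using bb by simp
      thus "(a, c) \<in> (if z \<in> G \<and> dm z \<in> rg ` B \<and> f (mul z b) \<noteq> 0 then {(mul z b, iv b)} else {})"
        using ac zG dz b' bb by auto
    next
      assume "(a, c) \<in> (if z \<in> G \<and> dm z \<in> rg ` B \<and> f (mul z b) \<noteq> 0 then {(mul z b, iv b)} else {})"
      hence h: "z \<in> G" "dm z \<in> rg ` B" "f (mul z b) \<noteq> 0" "a = mul z b" "c = iv b"
        by (auto split: if_splits)
      have bB: "b \<in> B" "rg b = dm z" using sec_in[OF B(2) h(2)] b_def by auto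
      hence bG: "b \<in> G" using B by auto
      have "mul (mul z b) (iv b) = mul z (mul b (iv b))" using h bB bG by (intro mul_assoc) auto
      also have "\<dots> = z" using h bB bG by simp
      finally show "(a, c) \<in> ?S" using h bB bG by (auto simp: composable_def cchar_def)
    qed
  qed
  have "dm z \<in> rg ` B \<Longrightarrow> b \<in> B" using sec_in[OF B(2)] b_def by auto
  thus ?thesis unfolding twisted_conv_def S b_def[symmetric] by (auto simp: cchar_def)
qed


lemma left_div[simp]: assumes "c \<in> G" "e \<in> G" "dm c = rg e" shows "mul (iv c) (mul c e) = e"
proof -
  have "mul (iv c) (mul c e) = mul (mul (iv c) c) e" using assms by (intro mul_assoc[symmetric]) auto
  also have "\<dots> = e" using assms by simp
  finally show ?thesis .
qed

lemma conv_superset: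
  assumes "finite P'"
    and "{(a, b). (a, b) \<in> composable \<Gamma> \<and> mul a b = z \<and> f a \<noteq> 0 \<and> g b \<noteq> 0} \<subseteq> P'"
    and "\<And>a b. (a, b) \<in> P' \<Longrightarrow> (a, b) \<in> composable \<Gamma> \<and> mul a b = z"
  shows "cv f g z = (\<Sum>(a, b)\<in>P'. \<nu> a b * f a * g b)"
  unfolding twisted_conv_def
  by (rule sum.mono_neutral_left[OF assms(1) assms(2)]) (use assms(3) in auto)

definition aslice :: "'g set \<Rightarrow> bool" where
  "aslice S \<longleftrightarrow> S \<subseteq> G \<and> inj_on dm S \<and> inj_on rg S"

definition SF :: "('g \<Rightarrow> 'k) \<Rightarrow> bool" where
  "SF f \<longleftrightarrow> (\<exists>F. finite F \<and> (\<forall>S\<in>F. aslice S) \<and> {x. f x \<noteq> 0} \<subseteq> \<Union>F)"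

lemma fin_fiber_rg:
  assumes "finite F" "\<forall>S\<in>F. aslice S"
  shows "finite {a \<in> \<Union>F. rg a = v}"
proof -
  have "{a \<in> \<Union>F. rg a = v} = (\<Union>S\<in>F. {a \<in> S. rg a = v})" by auto
  moreover have "finite {a \<in> S. rg a = v}" if "S \<in> F" for S
  proof -
    have "inj_on rg S" using assms that unfolding aslice_def by auto
    hence "{a \<in> S. rg a = v} \<subseteq> {} \<or> (\<exists>a. {a \<in> S. rg a = v} = {a})"
      by (auto dest: inj_onD)
    thus ?thesis by (metis finite.emptyI finite.insertI subset_empty)
  qed
  ultimately show ?thesis using assms by auto
qed

lemma fin_fact:
  assumes "SF f"
  shows "finite {(a, b). (a, b) \<in> composable \<Gamma> \<and> mul a b = z \<and> f a \<noteq> 0 \<and> g b \<noteq> 0}"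
proof -
  obtain F where F: "finite F" "\<forall>S\<in>F. aslice S" "{x. f x \<noteq> 0} \<subseteq> \<Union>F"
    using assms unfolding SF_def by blast
  have "{(a, b). (a, b) \<in> composable \<Gamma> \<and> mul a b = z \<and> f a \<noteq> 0 \<and> g b \<noteq> 0}
     \<subseteq> (\<lambda>a. (a, mul (iv a) z)) ` {a \<in> \<Union>F. rg a = rg z}"
  proof
    fix p assume "p \<in> {(a, b). (a, b) \<in> composable \<Gamma> \<and> mul a b = z \<and> f a \<noteq> 0 \<and> g b \<noteq> 0}"
    then obtain a b where h: "p = (a, b)" "(a, b) \<in> composable \<Gamma>" "z = mul a b" "f a \<noteq> 0" "g b \<noteq> 0" by auto
    hence "a \<in> G" "b \<in> G" "dm a = rg b" by (auto simp: composable_def)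
    thus "p \<in> (\<lambda>a. (a, mul (iv a) z)) ` {a \<in> \<Union>F. rg a = rg z}"
      using h F(3) by (intro image_eqI[of _ _ a]) auto
  qed
  thus ?thesis using fin_fiber_rg[OF F(1,2)] by (meson finite_imageI finite_subset)
qed

lemma assoc_sum_left:
  fixes h :: "'g \<Rightarrow> 'k" and x :: 'g
  assumes "SF f" "SF g"
  defines "T \<equiv> {(a, b, e). a \<in> G \<and> b \<in> G \<and> e \<in> G \<and> dm a = rg b \<and> dm b = rg e \<and>
       mul (mul a b) e = x \<and> f a \<noteq> 0 \<and> g b \<noteq> 0 \<and> h e \<noteq> 0}"
  shows "finite T" "cv (cv f g) h x = (\<Sum>(a, b, e)\<in>T. \<nu> a b * \<nu> (mul a b) e * f a * g b * h e)"
proof -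
  obtain F where F: "finite F" "\<forall>S\<in>F. aslice S" "{x. f x \<noteq> 0} \<subseteq> \<Union>F"
    using assms unfolding SF_def by blast
  obtain F' where F': "finite F'" "\<forall>S\<in>F'. aslice S" "{x. g x \<noteq> 0} \<subseteq> \<Union>F'"
    using assms unfolding SF_def by blast
  have "T \<subseteq> (\<lambda>(a, b). (a, b, mul (iv (mul a b)) x)) `
      (SIGMA a:{a \<in> \<Union>F. rg a = rg x}. {b \<in> \<Union>F'. rg b = dm a})"
  proof clarify
    fix a b e assume "(a, b, e) \<in> T"
    hence h: "a \<in> G" "b \<in> G" "e \<in> G" "dm a = rg b" "dm b = rg e" "x = mul (mul a b) e"
      "f a \<noteq> 0" "g b \<noteq> 0" "h e \<noteq> 0" unfolding T_def by auto
    show "(a, b, e) \<in> (\<lambda>(a, b). (a, b, mul (iv (mul a b)) x)) `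
      (SIGMA a:{a \<in> \<Union>F. rg a = rg x}. {b \<in> \<Union>F'. rg b = dm a})"
      using h F(3) F'(3) by (intro image_eqI[of _ _ "(a, b)"]) auto
  qed
  moreover have "finite (SIGMA a:{a \<in> \<Union>F. rg a = rg x}. {b \<in> \<Union>F'. rg b = dm a})"
    using fin_fiber_rg[OF F(1,2)] fin_fiber_rg[OF F'(1,2)] by blast
  ultimately show finT: "finite T" by (meson finite_imageI finite_subset)
  define Q where "Q c = {(a, b). (a, b) \<in> composable \<Gamma> \<and> mul a b = c \<and> f a \<noteq> 0 \<and> g b \<noteq> 0}" for c
  define P where "P = (\<lambda>(a, b, e). (mul a b, e)) ` T"
  have finP: "finite P" unfolding P_def using finT by simp
  have sub: "{(c, e). (c, e) \<in> composable \<Gamma> \<and> mul c e = x \<and> cv f g c \<noteq> 0 \<and> h e \<noteq> 0} \<subseteq> P"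
  proof clarify
    fix c e assume h: "(c, e) \<in> composable \<Gamma>" "x = mul c e" "cv f g c \<noteq> 0" "h e \<noteq> 0"
    hence "Q c \<noteq> {}" unfolding twisted_conv_def Q_def by force
    then obtain a b where ab: "(a, b) \<in> Q c" by auto
    hence "(a, b, e) \<in> T" using h unfolding Q_def T_def composable_def by auto
    moreover have "c = mul a b" using ab unfolding Q_def by auto
    ultimately show "(c, e) \<in> P" unfolding P_def by force
  qed
  have "cv (cv f g) h x = (\<Sum>(c, e)\<in>P. \<nu> c e * cv f g c * h e)"
    by (rule conv_superset[OF finP sub]) (auto simp: P_def T_def composable_def)
  also have "\<dots> = (\<Sum>(c, e)\<in>P. \<Sum>(a, b)\<in>Q c. \<nu> c e * (\<nu> a b * f a * g b) * h e)"
    by (auto simp: twisted_conv_def Q_def sum_distrib_left sum_distrib_right intro!: sum.cong)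
  also have "\<dots> = (\<Sum>p\<in>P. \<Sum>q\<in>Q (fst p). (\<lambda>(c, e). \<lambda>(a, b). \<nu> c e * (\<nu> a b * f a * g b) * h e) p q)"
    by (rule sum.cong) (auto simp: case_prod_beta)
  also have "\<dots> = (\<Sum>((c, e), (a, b))\<in>(SIGMA p:P. Q (fst p)). \<nu> c e * (\<nu> a b * f a * g b) * h e)"
  proof -
    have "\<forall>p\<in>P. finite (Q (fst p))" unfolding Q_def using fin_fact[OF assms(1)] by blast
    thus ?thesis using finP by (subst sum.Sigma) auto
  qed
  also have "\<dots> = (\<Sum>(a, b, e)\<in>T. \<nu> a b * \<nu> (mul a b) e * f a * g b * h e)"
    apply (rule sum.reindex_bij_witness[where i = "\<lambda>(a, b, e). ((mul a b, e), (a, b))"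
        and j = "\<lambda>((c, e), (a, b)). (a, b, e)"])
    apply (auto simp: Q_def P_def T_def composable_def algebra_simps image_iff)
    apply (metis dm_mul)
    apply blast
    done
  finally show "cv (cv f g) h x = (\<Sum>(a, b, e)\<in>T. \<nu> a b * \<nu> (mul a b) e * f a * g b * h e)" .
qed


lemma assoc_sum_right:
  fixes h :: "'g \<Rightarrow> 'k" and x :: 'g
  assumes "SF f" "SF g"
  defines "T \<equiv> {(a, b, e). a \<in> G \<and> b \<in> G \<and> e \<in> G \<and> dm a = rg b \<and> dm b = rg e \<and>
       mul (mul a b) e = x \<and> f a \<noteq> 0 \<and> g b \<noteq> 0 \<and> h e \<noteq> 0}"
  shows "cv f (cv g h) x = (\<Sum>(a, b, e)\<in>T. \<nu> a (mul b e) * \<nu> b e * f a * g b * h e)"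
proof -
  have finT: "finite T" using assoc_sum_left(1)[OF assms(1,2)] unfolding T_def by blast
  define Q where "Q y = {(b, e). (b, e) \<in> composable \<Gamma> \<and> mul b e = y \<and> g b \<noteq> 0 \<and> h e \<noteq> 0}" for y
  define P where "P = (\<lambda>(a, b, e). (a, mul b e)) ` T"
  have finP: "finite P" unfolding P_def using finT by simp
  have sub: "{(a, y). (a, y) \<in> composable \<Gamma> \<and> mul a y = x \<and> f a \<noteq> 0 \<and> cv g h y \<noteq> 0} \<subseteq> P"
  proof clarify
    fix a y assume h: "(a, y) \<in> composable \<Gamma>" "x = mul a y" "f a \<noteq> 0" "cv g h y \<noteq> 0"
    hence "Q y \<noteq> {}" unfolding twisted_conv_def Q_def by force
    then obtain b e where be: "(b, e) \<in> Q y" by auto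
    hence y: "y = mul b e" "b \<in> G" "e \<in> G" "dm b = rg e" unfolding Q_def composable_def by auto
    have aG: "a \<in> G" "dm a = rg y" using h unfolding composable_def by auto
    hence "dm a = rg b" using y by simp
    hence "mul (mul a b) e = mul a y" using y aG by (simp add: mul_assoc)
    hence "(a, b, e) \<in> T" using h be y aG \<open>dm a = rg b\<close> unfolding Q_def T_def by auto
    thus "(a, y) \<in> P" unfolding P_def using y by force
  qed
  have "cv f (cv g h) x = (\<Sum>(a, y)\<in>P. \<nu> a y * f a * cv g h y)"
  proof (rule conv_superset[OF finP sub])
    fix a y assume "(a, y) \<in> P"
    then obtain b e where "(a, b, e) \<in> T" "y = mul b e" unfolding P_def by auto
    thus "(a, y) \<in> composable \<Gamma> \<and> mul a y = x" unfolding T_def composable_def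
      by (auto simp: mul_assoc)
  qed
  also have "\<dots> = (\<Sum>(a, y)\<in>P. \<Sum>(b, e)\<in>Q y. \<nu> a y * f a * (\<nu> b e * g b * h e))"
    by (auto simp: twisted_conv_def Q_def sum_distrib_left sum_distrib_right intro!: sum.cong)
  also have "\<dots> = (\<Sum>p\<in>P. \<Sum>q\<in>Q (snd p). (\<lambda>(a, y). \<lambda>(b, e). \<nu> a y * f a * (\<nu> b e * g b * h e)) p q)"
    by (rule sum.cong) (auto simp: case_prod_beta)
  also have "\<dots> = (\<Sum>((a, y), (b, e))\<in>(SIGMA p:P. Q (snd p)). \<nu> a y * f a * (\<nu> b e * g b * h e))"
  proof -
    have "\<forall>p\<in>P. finite (Q (snd p))" unfolding Q_def using fin_fact[OF assms(2)] by blast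
    thus ?thesis using finP by (subst sum.Sigma) auto
  qed
  also have "\<dots> = (\<Sum>(a, b, e)\<in>T. \<nu> a (mul b e) * \<nu> b e * f a * g b * h e)"
    apply (rule sum.reindex_bij_witness[where i = "\<lambda>(a, b, e). ((a, mul b e), (b, e))"
        and j = "\<lambda>((a, y), (b, e)). (a, b, e)"])
    apply (auto simp: Q_def P_def T_def composable_def algebra_simps image_iff mul_assoc)
    apply (metis rg_mul)
    apply (metis rg_mul mul_assoc)
    apply (intro exI conjI; (rule refl)?; assumption?)
    apply (rule mul_assoc; assumption)
    done
  finally show ?thesis .
qed

lemma conv_assoc:
  assumes "SF f" "SF g"
  shows "cv (cv f g) h = cv f (cv g h)"
proof
  fix x
  show "cv (cv f g) h x = cv f (cv g h) x"
    unfolding assoc_sum_left(2)[OF assms] assoc_sum_right[OF assms]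
  proof (rule sum.cong[OF refl], clarify)
    fix a b e assume "a \<in> G" "b \<in> G" "e \<in> G" "dm a = rg b" "dm b = rg e"
    hence c: "\<nu> a b * \<nu> (mul a b) e = \<nu> a (mul b e) * \<nu> b e" by (rule nu_cocycle)
    show "\<nu> a b * \<nu> (mul a b) e * f a * g b * h e = \<nu> a (mul b e) * \<nu> b e * f a * g b * h e"
      by (simp add: c)
  qed
qed

end

context SA begin

lemma topG: "topspace X = G"
  using ample unfolding ample_groupoid_def etale_groupoid_def topological_groupoid_def by blast

lemma cos_aslice: "compact_open_slice X \<Gamma> U \<Longrightarrow> aslice U"
  unfolding compact_open_slice_def slice_def aslice_def using openin_subset topG by blast

lemma A_SF: assumes "f \<in> A" shows "SF f"
proof -
  have "\<exists>(n::nat) c U. (\<forall>i<n. compact_open_slice X \<Gamma> (U i)) \<and>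
     f = (\<lambda>x. \<Sum>i<n. if x \<in> U i then c i else 0)"
    using assms unfolding steinberg_algebra_def mem_Collect_eq by assumption
  then obtain n :: nat and c U where h: "\<forall>i<n. compact_open_slice X \<Gamma> (U i)"
     "f = (\<lambda>x. \<Sum>i<n. if x \<in> U i then c i else 0)" by blast
  have "{x. f x \<noteq> 0} \<subseteq> \<Union>(U ` {..<n})"
  proof
    fix x assume "x \<in> {x. f x \<noteq> 0}"
    hence "(\<Sum>i<n. if x \<in> U i then c i else 0) \<noteq> 0" using h by simp
    then obtain i where "i < n" "(if x \<in> U i then c i else 0) \<noteq> 0"
      by (rule sum.not_neutral_contains_not_neutral) auto
    thus "x \<in> \<Union>(U ` {..<n})" by (auto split: if_splits)
  qed
  moreover have "\<forall>S\<in>U ` {..<n}. aslice S" using h(1) cos_aslice by blast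
  ultimately show ?thesis unfolding SF_def by (intro exI[of _ "U ` {..<n}"]) simp
qed

lemma SF_conv: assumes "SF f" "SF g" shows "SF (cv f g)"
proof -
  obtain F where F: "finite F" "\<forall>S\<in>F. aslice S" "{x. f x \<noteq> 0} \<subseteq> \<Union>F"
    using assms unfolding SF_def by blast
  obtain F' where F': "finite F'" "\<forall>S\<in>F'. aslice S" "{x. g x \<noteq> 0} \<subseteq> \<Union>F'"
    using assms unfolding SF_def by blast
  define pr where "pr S T = {mul a b | a b. a \<in> S \<and> b \<in> T \<and> dm a = rg b}" for S T
  have "aslice (pr S T)" if "S \<in> F" "T \<in> F'" for S T
  proof -
    have S: "S \<subseteq> G" "inj_on dm S" "inj_on rg S" and T: "T \<subseteq> G" "inj_on dm T" "inj_on rg T"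
      using that F F' unfolding aslice_def by auto
    show ?thesis unfolding aslice_def pr_def
    proof (intro conjI)
      show "{mul a b |a b. a \<in> S \<and> b \<in> T \<and> dm a = rg b} \<subseteq> G"
      proof clarify
        fix a b assume "a \<in> S" "b \<in> T" "dm a = rg b"
        thus "mul a b \<in> G" using S T by (meson mul_G subsetD)
      qed
      show "inj_on dm {mul a b |a b. a \<in> S \<and> b \<in> T \<and> dm a = rg b}"
      proof (rule inj_onI, clarify)
        fix a b a' b' assume h: "a \<in> S" "b \<in> T" "dm a = rg b" "a' \<in> S" "b' \<in> T" "dm a' = rg b'"
          "dm (mul a b) = dm (mul a' b')"
        hence G: "a \<in> G" "b \<in> G" "a' \<in> G" "b' \<in> G" using S T by auto
        hence "dm b = dm b'" using h by simp
        hence "b = b'" using inj_onD[OF T(2) _ h(2) h(5)] by blast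
        hence "dm a = dm a'" using h by simp
        hence "a = a'" using inj_onD[OF S(2) _ h(1) h(4)] by blast
        thus "mul a b = mul a' b'" using \<open>b = b'\<close> by simp
      qed
      show "inj_on rg {mul a b |a b. a \<in> S \<and> b \<in> T \<and> dm a = rg b}"
      proof (rule inj_onI, clarify)
        fix a b a' b' assume h: "a \<in> S" "b \<in> T" "dm a = rg b" "a' \<in> S" "b' \<in> T" "dm a' = rg b'"
          "rg (mul a b) = rg (mul a' b')"
        hence G: "a \<in> G" "b \<in> G" "a' \<in> G" "b' \<in> G" using S T by auto
        hence "rg a = rg a'" using h by simp
        hence "a = a'" using inj_onD[OF S(3) _ h(1) h(4)] by blast
        hence "rg b = rg b'" using h by simp
        hence "b = b'" using inj_onD[OF T(3) _ h(2) h(5)] by blast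
        thus "mul a b = mul a' b'" using \<open>a = a'\<close> by simp
      qed
    qed
  qed
  moreover have "{x. cv f g x \<noteq> 0} \<subseteq> (\<Union>(S, T)\<in>F \<times> F'. pr S T)"
  proof
    fix z assume "z \<in> {x. cv f g x \<noteq> 0}"
    hence nz: "cv f g z \<noteq> 0" by simp
    have "{(a, b). (a, b) \<in> composable \<Gamma> \<and> mul a b = z \<and> f a \<noteq> 0 \<and> g b \<noteq> 0} \<noteq> {}"
    proof
      assume "{(a, b). (a, b) \<in> composable \<Gamma> \<and> mul a b = z \<and> f a \<noteq> 0 \<and> g b \<noteq> 0} = {}"
      hence "cv f g z = 0" unfolding twisted_conv_def by (simp only: sum.empty)
      thus False using nz by simp
    qed
    then obtain a b where ab: "(a, b) \<in> composable \<Gamma>" "mul a b = z" "f a \<noteq> 0" "g b \<noteq> 0" by auto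
    obtain S where S: "S \<in> F" "a \<in> S" using F(3) ab(3) by blast
    obtain T where T: "T \<in> F'" "b \<in> T" using F'(3) ab(4) by blast
    have "z \<in> pr S T" using ab S T unfolding pr_def composable_def by blast
    thus "z \<in> (\<Union>(S, T)\<in>F \<times> F'. pr S T)" using S T by blast
  qed
  ultimately show ?thesis unfolding SF_def
    by (intro exI[of _ "(\<lambda>(S, T). pr S T) ` (F \<times> F')"] conjI) (use F F' in auto)
qed

lemma cchar_A: "compact_open_slice X \<Gamma> U \<Longrightarrow> cchar c U \<in> A"
  unfolding steinberg_algebra_def cchar_def
  by (rule CollectI, rule exI[of _ 1], rule exI[of _ "\<lambda>_. c"], rule exI[of _ "\<lambda>_. U"]) auto

lemma char_fun_cchar: "char_fun L = cchar 1 L"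
  unfolding char_fun_def cchar_def by auto

end

context SA begin

lemma topgrp: "topological_groupoid X \<Gamma>"
  using ample unfolding ample_groupoid_def etale_groupoid_def by blast
lemma lochom: "local_homeomorphism X dm"
  using ample unfolding ample_groupoid_def etale_groupoid_def by blast

lemma iv_cont: "continuous_map X X iv"
  using topgrp unfolding topological_groupoid_def by blast
lemma mul_cont: "continuous_map (subtopology (prod_topology X X) (composable \<Gamma>)) X (\<lambda>p. mul (fst p) (snd p))"
  using topgrp unfolding topological_groupoid_def by blast

lemma openin_G: "openin X W \<Longrightarrow> W \<subseteq> G"
  using openin_subset topG by blast

lemma loc: assumes "x \<in> G"
  obtains V where "openin X V" "x \<in> V" "openin X (dm ` V)"
    "homeomorphic_map (subtopology X V) (subtopology X (dm ` V)) dm"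
  using lochom assms topG unfolding local_homeomorphism_def by metis

lemma dm_cont: "continuous_map X X dm"
  unfolding continuous_map_openin_preimage_eq
proof (intro conjI allI impI)
  show "dm \<in> topspace X \<rightarrow> topspace X" using topG by auto
  fix U assume U: "openin X U"
  show "openin X (topspace X \<inter> dm -` U)"
  proof (subst openin_subopen, intro ballI)
    fix x assume x: "x \<in> topspace X \<inter> dm -` U"
    obtain V where V: "openin X V" "x \<in> V" "openin X (dm ` V)"
      "homeomorphic_map (subtopology X V) (subtopology X (dm ` V)) dm"
      using loc x topG by blast
    have "continuous_map (subtopology X V) X dm"
      using homeomorphic_imp_continuous_map[OF V(4)] continuous_map_into_fulltopology by blast
    hence "openin (subtopology X V) {y \<in> topspace (subtopology X V). dm y \<in> U}"
      using U by (rule openin_continuous_map_preimage)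
    moreover have "topspace (subtopology X V) = V" using openin_subset[OF V(1)] by auto
    ultimately have "openin X {y \<in> V. dm y \<in> U}" using V(1) openin_trans_full by fastforce
    moreover have "{y \<in> V. dm y \<in> U} \<subseteq> topspace X \<inter> dm -` U" using openin_subset[OF V(1)] by auto
    ultimately show "\<exists>T. openin X T \<and> x \<in> T \<and> T \<subseteq> topspace X \<inter> dm -` U"
      using x V(2) by blast
  qed
qed

lemma dm_open: assumes "openin X W" shows "openin X (dm ` W)"
proof (subst openin_subopen, intro ballI)
  fix y assume "y \<in> dm ` W"
  then obtain x where x: "x \<in> W" "y = dm x" by auto
  obtain V where V: "openin X V" "x \<in> V" "openin X (dm ` V)"
      "homeomorphic_map (subtopology X V) (subtopology X (dm ` V)) dm"
    using loc x openin_G[OF assms] by blast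
  have om: "open_map (subtopology X V) (subtopology X (dm ` V)) dm"
    by (rule homeomorphic_imp_open_map[OF V(4)])
  have "openin (subtopology X V) (W \<inter> V)"
    using assms V(1) by (simp add: openin_open_subtopology openin_Int)
  hence "openin (subtopology X (dm ` V)) (dm ` (W \<inter> V))" using om unfolding open_map_def by blast
  hence "openin X (dm ` (W \<inter> V))" using V(3) openin_trans_full by blast
  thus "\<exists>T. openin X T \<and> y \<in> T \<and> T \<subseteq> dm ` W" using x V(2) by blast
qed

lemma iv_image: assumes "W \<subseteq> G" shows "iv ` W = {x \<in> G. iv x \<in> W}"
proof
  show "iv ` W \<subseteq> {x \<in> G. iv x \<in> W}" using assms by auto
  show "{x \<in> G. iv x \<in> W} \<subseteq> iv ` W"
  proof
    fix x assume "x \<in> {x \<in> G. iv x \<in> W}"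
    thus "x \<in> iv ` W" by (intro image_eqI[of _ _ "iv x"]) auto
  qed
qed

lemma iv_open: assumes "openin X W" shows "openin X (iv ` W)"
proof -
  have "openin X {x \<in> topspace X. iv x \<in> W}"
    by (rule openin_continuous_map_preimage[OF iv_cont assms])
  thus ?thesis using iv_image[OF openin_G[OF assms]] topG by simp
qed

lemma rg_eq: "x \<in> G \<Longrightarrow> rg x = dm (iv x)" by simp

lemma rg_cont: "continuous_map X X rg"
proof -
  have "continuous_map X X (dm \<circ> iv)" using dm_cont iv_cont by (rule continuous_map_compose[rotated])
  thus ?thesis by (rule continuous_map_eq) (auto simp: topG)
qed

lemma rg_image: assumes "W \<subseteq> G" shows "rg ` W = dm ` (iv ` W)"
proof -
  have "rg ` W = (dm \<circ> iv) ` W" using assms by (intro image_cong) auto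
  thus ?thesis by (simp add: image_comp)
qed

lemma rg_open: assumes "openin X W" shows "openin X (rg ` W)"
  using rg_image[OF openin_G[OF assms]] dm_open[OF iv_open[OF assms]] by simp

lemma G0_open: "openin X G0"
  using eff unfolding effective_def by (metis openin_interior_of)

lemma G0_hausdorff:
  assumes "u \<in> G0" "v \<in> G0" "u \<noteq> v"
  obtains P Q where "openin X P" "openin X Q" "u \<in> P" "v \<in> Q" "P \<inter> Q = {}" "P \<subseteq> G0" "Q \<subseteq> G0"
proof -
  have "topspace (subtopology X G0) = G0" using G0_sub topG by auto
  then obtain P Q where PQ: "openin (subtopology X G0) P" "openin (subtopology X G0) Q" "u \<in> P" "v \<in> Q" "disjnt P Q"
    using units_H assms unfolding Hausdorff_space_def by metis
  have "openin X P" "openin X Q" "P \<subseteq> G0" "Q \<subseteq> G0"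
    using PQ G0_open openin_open_subtopology by blast+
  thus ?thesis using that PQ by (simp add: disjnt_def)
qed

lemma ample_basis: "openin X W \<Longrightarrow> x \<in> W \<Longrightarrow> \<exists>U. compact_open_slice X \<Gamma> U \<and> x \<in> U \<and> U \<subseteq> W"
  using ample unfolding ample_groupoid_def by blast

lemma unit_cos: assumes "openin X K" "compactin X K" "K \<subseteq> G0" shows "compact_open_slice X \<Gamma> K"
proof -
  have "inj_on dm K" "inj_on rg K" using assms(3) unfolding inj_on_def by (metis dm_unit subsetD, metis rg_unit subsetD)
  thus ?thesis using assms unfolding compact_open_slice_def slice_def by blast
qed

lemma cos_open: "compact_open_slice X \<Gamma> U \<Longrightarrow> openin X U"
  unfolding compact_open_slice_def slice_def by blast
lemma cos_compact: "compact_open_slice X \<Gamma> U \<Longrightarrow> compactin X U"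
  unfolding compact_open_slice_def by blast
lemma cos_injd: "compact_open_slice X \<Gamma> U \<Longrightarrow> inj_on dm U"
  unfolding compact_open_slice_def slice_def by blast
lemma cos_injr: "compact_open_slice X \<Gamma> U \<Longrightarrow> inj_on rg U"
  unfolding compact_open_slice_def slice_def by blast

lemma small_unit_cos: assumes "openin X Om" "Om \<subseteq> G0" "Om \<noteq> {}"
  obtains K where "openin X K" "compactin X K" "K \<subseteq> Om" "K \<noteq> {}" "compact_open_slice X \<Gamma> K"
proof -
  obtain x where "x \<in> Om" using assms by auto
  then obtain U where "compact_open_slice X \<Gamma> U" "x \<in> U" "U \<subseteq> Om" using ample_basis assms by blast
  thus ?thesis using that cos_open cos_compact by blast
qed

end

context SA begin

lemma preim_open: "continuous_map X X f \<Longrightarrow> openin X U \<Longrightarrow> openin X {x \<in> G. f x \<in> U}"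
  using openin_continuous_map_preimage topG by fastforce

lemma shrink:
  assumes V: "openin X V" "inj_on dm V" and O': "openin X O'" "O' \<subseteq> G0" "O' \<noteq> {}"
  shows "\<exists>O''. openin X O'' \<and> O'' \<noteq> {} \<and> O'' \<subseteq> O' \<and> (\<forall>z\<in>V. dm z \<in> O'' \<and> rg z \<in> O'' \<longrightarrow> z \<in> G0)"
proof (cases "\<exists>z\<in>V. dm z \<in> O' \<and> rg z \<noteq> dm z")
  case True
  then obtain z where z: "z \<in> V" "dm z \<in> O'" "rg z \<noteq> dm z" by blast
  have zG: "z \<in> G" using z V openin_G by blast
  obtain P Q where PQ: "openin X P" "openin X Q" "dm z \<in> P" "rg z \<in> Q" "P \<inter> Q = {}"
    using G0_hausdorff[of "dm z" "rg z"] zG z(3) by (metis dm_G0 rg_G0)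
  define W where "W = V \<inter> {w \<in> G. dm w \<in> P \<inter> O'} \<inter> {w \<in> G. rg w \<in> Q}"
  have "openin X W" unfolding W_def
    using V(1) preim_open[OF dm_cont, of "P \<inter> O'"] preim_open[OF rg_cont PQ(2)] PQ(1) O'(1)
    by (intro openin_Int) auto
  hence op: "openin X (dm ` W)" by (rule dm_open)
  have zW: "z \<in> W" unfolding W_def using z zG PQ by auto
  show ?thesis
  proof (intro exI[of _ "dm ` W"] conjI op)
    show "dm ` W \<noteq> {}" using zW by auto
    show "dm ` W \<subseteq> O'" unfolding W_def by auto
    show "\<forall>z\<in>V. dm z \<in> dm ` W \<and> rg z \<in> dm ` W \<longrightarrow> z \<in> G0"
    proof (intro ballI impI)
      fix y assume y: "y \<in> V" "dm y \<in> dm ` W \<and> rg y \<in> dm ` W"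
      then obtain w where w: "w \<in> W" "dm y = dm w" by auto
      have "w \<in> V" using w unfolding W_def by auto
      hence "y = w" using inj_onD[OF V(2) w(2) y(1)] by blast
      hence "rg y \<in> Q" using w unfolding W_def by auto
      moreover have "rg y \<in> P" using y unfolding W_def by auto
      ultimately show "y \<in> G0" using PQ(5) by blast
    qed
  qed
next
  case False
  define W where "W = V \<inter> {w \<in> G. dm w \<in> O'}"
  have oW: "openin X W" unfolding W_def using V(1) preim_open[OF dm_cont O'(1)] by (intro openin_Int)
  have "W \<subseteq> isotropy \<Gamma>" unfolding W_def isotropy_def using False by auto
  hence "W \<subseteq> G0" using interior_of_maximal[OF _ oW] eff unfolding effective_def by blast
  show ?thesis
  proof (intro exI[of _ O'] conjI O' subset_refl ballI impI)
    fix z assume "z \<in> V" "dm z \<in> O' \<and> rg z \<in> O'"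
    hence "z \<in> W" unfolding W_def using V(1) openin_G by auto
    thus "z \<in> G0" using \<open>W \<subseteq> G0\<close> by blast
  qed
qed

lemma shrink_many:
  assumes "finite VV" "\<forall>V\<in>VV. openin X V \<and> inj_on dm V"
  shows "\<And>O'. openin X O' \<Longrightarrow> O' \<subseteq> G0 \<Longrightarrow> O' \<noteq> {} \<Longrightarrow>
    \<exists>O''. openin X O'' \<and> O'' \<noteq> {} \<and> O'' \<subseteq> O' \<and> (\<forall>V\<in>VV. \<forall>z\<in>V. dm z \<in> O'' \<and> rg z \<in> O'' \<longrightarrow> z \<in> G0)"
  using assms
proof (induction VV rule: finite_induct)
  case empty
  thus ?case by blast
next
  case (insert V VV O')
  obtain O1 where O1: "openin X O1" "O1 \<noteq> {}" "O1 \<subseteq> O'" "\<forall>z\<in>V. dm z \<in> O1 \<and> rg z \<in> O1 \<longrightarrow> z \<in> G0"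
    using shrink[of V O'] insert by auto
  obtain O2 where O2: "openin X O2" "O2 \<noteq> {}" "O2 \<subseteq> O1" "\<forall>W\<in>VV. \<forall>z\<in>W. dm z \<in> O2 \<and> rg z \<in> O2 \<longrightarrow> z \<in> G0"
    using insert.IH[of O1] O1 insert.prems by auto
  show ?case using O1 O2 by (intro exI[of _ O2]) blast
qed

definition LCP :: "('g \<Rightarrow> 'k) \<Rightarrow> 'g set \<Rightarrow> bool" where
  "LCP h Om \<longleftrightarrow> (\<forall>O'. openin X O' \<and> O' \<noteq> {} \<and> O' \<subseteq> Om \<longrightarrow>
     (\<exists>O''. openin X O'' \<and> O'' \<noteq> {} \<and> O'' \<subseteq> O' \<and> (\<forall>x\<in>O''. \<forall>y\<in>O''. h x = h y)))"

lemma LCP_D: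
  assumes "LCP h Om" "openin X O'" "O' \<noteq> {}" "O' \<subseteq> Om"
  obtains O'' where "openin X O''" "O'' \<noteq> {}" "O'' \<subseteq> O'" "\<forall>x\<in>O''. \<forall>y\<in>O''. h x = h y"
proof -
  have "openin X O' \<and> O' \<noteq> {} \<and> O' \<subseteq> Om \<longrightarrow>
     (\<exists>O''. openin X O'' \<and> O'' \<noteq> {} \<and> O'' \<subseteq> O' \<and> (\<forall>x\<in>O''. \<forall>y\<in>O''. h x = h y))"
    using assms(1) unfolding LCP_def by (rule spec)
  hence "\<exists>O''. openin X O'' \<and> O'' \<noteq> {} \<and> O'' \<subseteq> O' \<and> (\<forall>x\<in>O''. \<forall>y\<in>O''. h x = h y)"
    using assms(2-4) by blast
  thus ?thesis using that by blast
qed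

lemma LCP_const: "LCP (\<lambda>_. c) Om" unfolding LCP_def by (intro allI impI, rule_tac x=O' in exI) simp

lemma LCP_bin: assumes "LCP h1 Om" "LCP h2 Om" shows "LCP (\<lambda>x. F (h1 x) (h2 x)) Om"
  unfolding LCP_def
proof (intro allI impI)
  fix O' assume O': "openin X O' \<and> O' \<noteq> {} \<and> O' \<subseteq> Om"
  obtain O1 where O1: "openin X O1" "O1 \<noteq> {}" "O1 \<subseteq> O'" "\<forall>x\<in>O1. \<forall>y\<in>O1. h1 x = h1 y"
    using LCP_D[OF assms(1)] O' by metis
  have "O1 \<subseteq> Om" using O1 O' by blast
  obtain O2 where O2: "openin X O2" "O2 \<noteq> {}" "O2 \<subseteq> O1" "\<forall>x\<in>O2. \<forall>y\<in>O2. h2 x = h2 y"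
    using LCP_D[OF assms(2) O1(1,2) \<open>O1 \<subseteq> Om\<close>] by metis
  show "\<exists>O''. openin X O'' \<and> O'' \<noteq> {} \<and> O'' \<subseteq> O' \<and> (\<forall>x\<in>O''. \<forall>y\<in>O''. F (h1 x) (h2 x) = F (h1 y) (h2 y))"
  proof (intro exI[of _ O2] conjI ballI)
    show "openin X O2" "O2 \<noteq> {}" using O2 by auto
    show "O2 \<subseteq> O'" using O1(3) O2(3) by blast
    fix x y assume "x \<in> O2" "y \<in> O2"
    hence "h1 x = h1 y" "h2 x = h2 y" using O1(4) O2(3,4) by blast+
    thus "F (h1 x) (h2 x) = F (h1 y) (h2 y)" by simp
  qed
qed

lemma LCP_cong: assumes "LCP h Om" "\<And>x. x \<in> Om \<Longrightarrow> h x = h' x" shows "LCP h' Om"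
  unfolding LCP_def
proof (intro allI impI)
  fix O' assume O': "openin X O' \<and> O' \<noteq> {} \<and> O' \<subseteq> Om"
  then obtain O'' where O'': "openin X O''" "O'' \<noteq> {}" "O'' \<subseteq> O'" "\<forall>x\<in>O''. \<forall>y\<in>O''. h x = h y"
    using LCP_D[OF assms(1)] by metis
  have "\<forall>x\<in>O''. \<forall>y\<in>O''. h' x = h' y"
  proof (intro ballI)
    fix x y assume "x \<in> O''" "y \<in> O''"
    moreover hence "x \<in> Om" "y \<in> Om" using O''(3) O' by auto
    ultimately show "h' x = h' y" using O''(4) assms(2) by metis
  qed
  thus "\<exists>O''. openin X O'' \<and> O'' \<noteq> {} \<and> O'' \<subseteq> O' \<and> (\<forall>x\<in>O''. \<forall>y\<in>O''. h' x = h' y)"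
    using O'' by blast
qed

lemma LCP_sum: assumes "\<And>i. i < (n::nat) \<Longrightarrow> LCP (\<phi> i) Om" shows "LCP (\<lambda>x. \<Sum>i<n. \<phi> i x) Om"
  using assms
proof (induction n)
  case 0 thus ?case by (simp add: LCP_const)
next
  case (Suc n)
  have "LCP (\<lambda>x. (\<Sum>i<n. \<phi> i x) + \<phi> n x) Om"
    using Suc by (intro LCP_bin[where F = "(+)"]) auto
  thus ?case by simp
qed

lemma LCP_ind: assumes "openin X S" shows "LCP (\<lambda>x. if x \<in> S then c else 0) Om"
  unfolding LCP_def
proof (intro allI impI)
  fix O' assume O': "openin X O' \<and> O' \<noteq> {} \<and> O' \<subseteq> Om"
  show "\<exists>O''. openin X O'' \<and> O'' \<noteq> {} \<and> O'' \<subseteq> O' \<and>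
       (\<forall>x\<in>O''. \<forall>y\<in>O''. (if x \<in> S then c else 0) = (if y \<in> S then c else 0))"
  proof (cases "O' \<inter> S = {}")
    case True thus ?thesis using O' by (intro exI[of _ O']) auto
  next
    case False thus ?thesis using O' assms by (intro exI[of _ "O' \<inter> S"]) auto
  qed
qed

lemma AKL:
  assumes VV: "finite VV" "\<forall>V\<in>VV. openin X V \<and> inj_on dm V"
    and Om: "openin X Om" "Om \<subseteq> G0" "Om \<noteq> {}"
    and supp: "\<forall>z\<in>G - G0. h z \<noteq> 0 \<longrightarrow> z \<in> \<Union>VV"
    and nz: "\<forall>v\<in>Om. h v \<noteq> 0"
    and lc: "LCP h Om"
  shows "\<exists>K c. compact_open_slice X \<Gamma> K \<and> openin X K \<and> compactin X K \<and> K \<subseteq> G0 \<and> K \<noteq> {} \<and> c \<noteq> 0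
    \<and> (\<forall>z\<in>G. rg z \<in> K \<and> dm z \<in> K \<longrightarrow> h z = cchar c K z)"
proof -
  obtain O1 where O1: "openin X O1" "O1 \<noteq> {}" "O1 \<subseteq> Om" "\<forall>V\<in>VV. \<forall>z\<in>V. dm z \<in> O1 \<and> rg z \<in> O1 \<longrightarrow> z \<in> G0"
    using shrink_many[OF VV Om(1,2,3)] by blast
  obtain O2 where O2: "openin X O2" "O2 \<noteq> {}" "O2 \<subseteq> O1" "\<forall>x\<in>O2. \<forall>y\<in>O2. h x = h y"
    using LCP_D[OF lc O1(1,2)] O1(3) by metis
  obtain K where K: "openin X K" "compactin X K" "K \<subseteq> O2" "K \<noteq> {}" "compact_open_slice X \<Gamma> K"
    using small_unit_cos[OF O2(1) _ O2(2)] O2(3) O1(3) Om(2) by blast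
  obtain v where v: "v \<in> K" using K by auto
  define c where "c = h v"
  have c: "c \<noteq> 0" unfolding c_def using nz v K O2 O1 by blast
  have KG0: "K \<subseteq> G0" using K O2 O1 Om by blast
  show ?thesis
  proof (intro exI[of _ K] exI[of _ c] conjI K c KG0 ballI impI)
    fix z assume z: "z \<in> G" "rg z \<in> K \<and> dm z \<in> K"
    show "h z = cchar c K z"
    proof (cases "z \<in> G0")
      case True
      hence "z \<in> K" using z by simp
      thus ?thesis unfolding cchar_def c_def using O2(4) v K(3) by auto
    next
      case False
      hence "z \<notin> K" using KG0 by blast
      have "h z = 0"
      proof (rule ccontr)
        assume "h z \<noteq> 0"
        then obtain V where "V \<in> VV" "z \<in> V" using supp z False by blast
        hence "z \<in> G0" using O1(4) z K(3) O2(3) by blast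
        thus False using False by blast
      qed
      thus ?thesis unfolding cchar_def using \<open>z \<notin> K\<close> by simp
    qed
  qed
qed

end

context SA begin

lemma topsub: "S \<subseteq> G \<Longrightarrow> topspace (subtopology X S) = S"
  using topG by auto

lemma pair_cont1: "continuous_map X (subtopology (prod_topology X X) (composable \<Gamma>)) (\<lambda>b. (b, iv b))"
proof (rule continuous_map_into_subtopology)
  show "continuous_map X (prod_topology X X) (\<lambda>b. (b, iv b))"
    using iv_cont by (simp add: continuous_map_paired)
  show "(\<lambda>b. (b, iv b)) \<in> topspace X \<rightarrow> composable \<Gamma>" using topG by (auto simp: composable_def)
qed

lemma pair_cont2: "continuous_map X (subtopology (prod_topology X X) (composable \<Gamma>)) (\<lambda>b. (iv b, b))"
proof (rule continuous_map_into_subtopology)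
  show "continuous_map X (prod_topology X X) (\<lambda>b. (iv b, b))"
    using iv_cont by (simp add: continuous_map_paired)
  show "(\<lambda>b. (iv b, b)) \<in> topspace X \<rightarrow> composable \<Gamma>" using topG by (auto simp: composable_def)
qed

lemma nu_lc:
  assumes p: "continuous_map X (subtopology (prod_topology X X) (composable \<Gamma>)) p" and y: "y \<in> G"
  shows "\<exists>W. openin X W \<and> y \<in> W \<and> (\<forall>y'\<in>W. \<nu> (fst (p y')) (snd (p y')) = \<nu> (fst (p y)) (snd (p y)))"
proof -
  have py: "p y \<in> composable \<Gamma>" using continuous_map_image_subset_topspace[OF p] y topG by auto
  obtain W where W: "openin (subtopology (prod_topology X X) (composable \<Gamma>)) W" "p y \<in> W"
      "\<forall>q\<in>W. \<nu> (fst q) (snd q) = \<nu> (fst (p y)) (snd (p y))"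
  proof -
    have "\<forall>p\<in>composable \<Gamma>. \<exists>W. openin (subtopology (prod_topology X X) (composable \<Gamma>)) W
        \<and> p \<in> W \<and> (\<forall>q\<in>W. \<nu> (fst q) (snd q) = \<nu> (fst p) (snd p))"
      using cocycle unfolding continuous_2_cocycle_def by (rule conjunct1[OF conjunct2])
    hence "\<exists>W. openin (subtopology (prod_topology X X) (composable \<Gamma>)) W
        \<and> p y \<in> W \<and> (\<forall>q\<in>W. \<nu> (fst q) (snd q) = \<nu> (fst (p y)) (snd (p y)))"
      using py by (rule bspec)
    thus ?thesis using that by blast
  qed
  have "openin X {x \<in> topspace X. p x \<in> W}" by (rule openin_continuous_map_preimage[OF p W(1)])
  moreover have "y \<in> {x \<in> topspace X. p x \<in> W}" using W(2) y topG by simp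
  moreover have "\<forall>y'\<in>{x \<in> topspace X. p x \<in> W}. \<nu> (fst (p y')) (snd (p y')) = \<nu> (fst (p y)) (snd (p y))"
    using W(3) by blast
  ultimately show ?thesis by blast
qed

lemma sec_cont:
  assumes B: "openin X B" "inj_on rg B"
  shows "continuous_map (subtopology X (rg ` B)) X (sec B)"
  unfolding continuous_map_openin_preimage_eq
proof (intro conjI allI impI)
  have BG: "B \<subseteq> G" using openin_G B by blast
  hence rB: "rg ` B \<subseteq> G" by auto
  show "sec B \<in> topspace (subtopology X (rg ` B)) \<rightarrow> topspace X"
    using sec_in[OF B(2)] topsub[OF rB] BG topG by auto
  fix W assume W: "openin X W"
  have "topspace (subtopology X (rg ` B)) \<inter> sec B -` W = rg ` (B \<inter> W)"
  proof
    show "topspace (subtopology X (rg ` B)) \<inter> sec B -` W \<subseteq> rg ` (B \<inter> W)"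
    proof
      fix v assume "v \<in> topspace (subtopology X (rg ` B)) \<inter> sec B -` W"
      hence v: "v \<in> rg ` B" "sec B v \<in> W" using topsub[OF rB] by auto
      thus "v \<in> rg ` (B \<inter> W)" using sec_in[OF B(2) v(1)] by (intro image_eqI[of _ _ "sec B v"]) auto
    qed
    show "rg ` (B \<inter> W) \<subseteq> topspace (subtopology X (rg ` B)) \<inter> sec B -` W"
      using sec[OF B(2)] topsub[OF rB] by auto
  qed
  moreover have "openin X (rg ` (B \<inter> W))" using rg_open B(1) W by (simp add: openin_Int)
  ultimately show "openin (subtopology X (rg ` B)) (topspace (subtopology X (rg ` B)) \<inter> sec B -` W)"
    using openin_open_subtopology[OF rg_open[OF B(1)]] by auto
qed

lemma V_open:
  assumes B: "openin X B" "inj_on rg B" and U: "openin X U"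
  shows "openin X {z \<in> G. dm z \<in> rg ` B \<and> mul z (sec B (dm z)) \<in> U}"
proof -
  have BG: "B \<subseteq> G" using openin_G B by blast
  define D where "D = {z \<in> G. dm z \<in> rg ` B}"
  have oD: "openin X D" unfolding D_def by (rule preim_open[OF dm_cont rg_open[OF B(1)]])
  have DG: "D \<subseteq> G" unfolding D_def by auto
  have c1: "continuous_map (subtopology X D) (subtopology X (rg ` B)) dm"
    by (rule continuous_map_into_subtopology[OF continuous_map_from_subtopology[OF dm_cont]])
       (use topsub[OF DG] in \<open>auto simp: D_def\<close>)
  have c2: "continuous_map (subtopology X D) X (\<lambda>z. sec B (dm z))"
    using continuous_map_compose[OF c1 sec_cont[OF B]] by (simp add: o_def)
  have c3: "continuous_map (subtopology X D) (prod_topology X X) (\<lambda>z. (z, sec B (dm z)))"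
    using c2 continuous_map_from_subtopology[OF continuous_map_id] by (simp add: continuous_map_paired)
  have c4: "continuous_map (subtopology X D) (subtopology (prod_topology X X) (composable \<Gamma>)) (\<lambda>z. (z, sec B (dm z)))"
  proof (rule continuous_map_into_subtopology[OF c3])
    show "(\<lambda>z. (z, sec B (dm z))) \<in> topspace (subtopology X D) \<rightarrow> composable \<Gamma>"
      using topsub[OF DG] sec_in[OF B(2)] BG unfolding D_def composable_def by auto
  qed
  have c5: "continuous_map (subtopology X D) X (\<lambda>z. mul z (sec B (dm z)))"
    using continuous_map_compose[OF c4 mul_cont] by (simp add: o_def)
  have "openin (subtopology X D) {z \<in> topspace (subtopology X D). mul z (sec B (dm z)) \<in> U}"
    by (rule openin_continuous_map_preimage[OF c5 U])
  hence "openin X {z \<in> topspace (subtopology X D). mul z (sec B (dm z)) \<in> U}"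
    using oD openin_trans_full by blast
  moreover have "{z \<in> topspace (subtopology X D). mul z (sec B (dm z)) \<in> U} = {z \<in> G. dm z \<in> rg ` B \<and> mul z (sec B (dm z)) \<in> U}"
    using topsub[OF DG] unfolding D_def by auto
  ultimately show ?thesis by simp
qed


lemma iv_cos: assumes "compact_open_slice X \<Gamma> B" shows "compact_open_slice X \<Gamma> (iv ` B)"
proof -
  have B: "openin X B" "compactin X B" "inj_on dm B" "inj_on rg B"
    using assms cos_open cos_compact cos_injd cos_injr by auto
  have BG: "B \<subseteq> G" using openin_G B by blast
  have "openin X (iv ` B)" using iv_open B by blast
  moreover have "compactin X (iv ` B)" using image_compactin[OF B(2) iv_cont] .
  moreover have "inj_on dm (iv ` B)"
  proof (rule inj_onI, clarify)
    fix x y assume "x \<in> B" "y \<in> B" "dm (iv x) = dm (iv y)"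
    hence "rg x = rg y" using BG \<open>x \<in> B\<close> \<open>y \<in> B\<close> dm_iv by (metis subsetD)
    thus "iv x = iv y" using inj_onD[OF B(4) _ \<open>x \<in> B\<close> \<open>y \<in> B\<close>] by simp
  qed
  moreover have "inj_on rg (iv ` B)"
  proof (rule inj_onI, clarify)
    fix x y assume "x \<in> B" "y \<in> B" "rg (iv x) = rg (iv y)"
    hence "dm x = dm y" using BG \<open>x \<in> B\<close> \<open>y \<in> B\<close> rg_iv by (metis subsetD)
    thus "iv x = iv y" using inj_onD[OF B(3) _ \<open>x \<in> B\<close> \<open>y \<in> B\<close>] by simp
  qed
  ultimately show ?thesis unfolding compact_open_slice_def slice_def by blast
qed

lemma LCP_nu:
  assumes B: "openin X B" "inj_on rg B"
  shows "LCP (\<lambda>v. \<nu> (sec B v) (iv (sec B v))) (rg ` B)"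
  unfolding LCP_def
proof (intro allI impI)
  fix O' assume O': "openin X O' \<and> O' \<noteq> {} \<and> O' \<subseteq> rg ` B"
  have BG: "B \<subseteq> G" using openin_G B by blast
  obtain v0 where v0: "v0 \<in> O'" using O' by blast
  hence v0B: "v0 \<in> rg ` B" using O' by blast
  define b0 where "b0 = sec B v0"
  have b0: "b0 \<in> B" "rg b0 = v0" using sec_in[OF B(2) v0B] b0_def by auto
  obtain W where W: "openin X W" "b0 \<in> W" "\<forall>b\<in>W. \<nu> b (iv b) = \<nu> b0 (iv b0)"
    using nu_lc[OF pair_cont1, of b0] b0 BG by auto
  define W' where "W' = B \<inter> W \<inter> {b \<in> G. rg b \<in> O'}"
  have oW': "openin X W'" unfolding W'_def using B(1) W(1) preim_open[OF rg_cont, of O'] O'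
    by (intro openin_Int) auto
  show "\<exists>O''. openin X O'' \<and> O'' \<noteq> {} \<and> O'' \<subseteq> O' \<and>
      (\<forall>x\<in>O''. \<forall>y\<in>O''. \<nu> (sec B x) (iv (sec B x)) = \<nu> (sec B y) (iv (sec B y)))"
  proof (intro exI[of _ "rg ` W'"] conjI)
    show "openin X (rg ` W')" using rg_open[OF oW'] .
    show "rg ` W' \<noteq> {}" using b0 W v0 BG unfolding W'_def by auto
    show "rg ` W' \<subseteq> O'" unfolding W'_def by auto
    have "\<nu> (sec B x) (iv (sec B x)) = \<nu> b0 (iv b0)" if xW: "x \<in> rg ` W'" for x
    proof -
      obtain b where b: "b \<in> W'" "x = rg b" using xW by auto
      have "sec B x = b" using b sec[OF B(2)] unfolding W'_def by auto
      thus ?thesis using W(3) b unfolding W'_def by auto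
    qed
    thus "\<forall>x\<in>rg ` W'. \<forall>y\<in>rg ` W'. \<nu> (sec B x) (iv (sec B x)) = \<nu> (sec B y) (iv (sec B y))"
      by metis
  qed
qed

lemma key:
  assumes f: "f \<in> A" and supp: "X interior_of {x. f x \<noteq> 0} \<noteq> {}"
  shows "\<exists>B K c. compact_open_slice X \<Gamma> B \<and> compact_open_slice X \<Gamma> K \<and> openin X K \<and> compactin X K
     \<and> K \<subseteq> G0 \<and> K \<noteq> {} \<and> c \<noteq> 0
     \<and> (\<forall>z\<in>G. rg z \<in> K \<and> dm z \<in> K \<longrightarrow> cv f (cchar 1 (iv ` B)) z = cchar c K z)"
proof -
  obtain \<xi> where \<xi>: "\<xi> \<in> X interior_of {x. f x \<noteq> 0}" using supp by blast
  obtain B where B0: "compact_open_slice X \<Gamma> B" "\<xi> \<in> B" "B \<subseteq> X interior_of {x. f x \<noteq> 0}"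
    using ample_basis[OF openin_interior_of \<xi>] by blast
  have B: "openin X B" "inj_on dm B" "inj_on rg B" using B0 cos_open cos_injd cos_injr by auto
  have BG: "B \<subseteq> G" using openin_G[OF B(1)] .
  have Bsupp: "f b \<noteq> 0" if bB: "b \<in> B" for b
  proof -
    have "b \<in> {x. f x \<noteq> 0}" by (rule subsetD[OF interior_of_subset subsetD[OF B0(3) bB]])
    thus ?thesis by simp
  qed
  have "\<exists>(n::nat) c U. (\<forall>i<n. compact_open_slice X \<Gamma> (U i)) \<and>
     f = (\<lambda>x. \<Sum>i<n. if x \<in> U i then c i else 0)"
    using f unfolding steinberg_algebra_def mem_Collect_eq by assumption
  then obtain n :: nat and c U where rep: "\<forall>i<n. compact_open_slice X \<Gamma> (U i)"
     "f = (\<lambda>x. \<Sum>i<n. if x \<in> U i then c i else 0)" by blast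
  define g where "g = cv f (cchar 1 (iv ` B))"
  have gform: "g z = (if z \<in> G \<and> dm z \<in> rg ` B then
      \<nu> (mul z (sec B (dm z))) (iv (sec B (dm z))) * f (mul z (sec B (dm z))) else 0)" for z
    unfolding g_def by (rule conv_slice_right[OF BG B(3)])
  define V where "V i = {z \<in> G. dm z \<in> rg ` B \<and> mul z (sec B (dm z)) \<in> U i}" for i
  have Vopen: "openin X (V i)" if "i < n" for i
    unfolding V_def using V_open[OF B(1) B(3)] rep(1) that cos_open by blast
  have Vinj: "inj_on dm (V i)" if "i < n" for i
  proof (rule inj_onI)
    fix z z' assume z: "z \<in> V i" "z' \<in> V i" "dm z = dm z'"
    define b where "b = sec B (dm z)"
    have zz: "z \<in> G" "z' \<in> G" "dm z \<in> rg ` B" "mul z b \<in> U i" "mul z' b \<in> U i"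
      using z unfolding V_def b_def by auto
    have b: "b \<in> B" "rg b = dm z" using sec_in[OF B(3) zz(3)] b_def by auto
    have bG: "b \<in> G" using b(1) BG by blast
    have e1: "dm z = rg b" "dm z' = rg b" using b(2) z(3) by auto
    have "dm (mul z b) = dm b" using dm_mul[OF zz(1) bG e1(1)] .
    moreover have "dm (mul z' b) = dm b" using dm_mul[OF zz(2) bG e1(2)] .
    ultimately have "dm (mul z b) = dm (mul z' b)" by simp
    hence "mul z b = mul z' b" using inj_onD[OF cos_injd[OF rep(1)[rule_format, OF that]] _ zz(4) zz(5)] by blast
    thus "z = z'" using cancel_right[OF zz(1) zz(2) bG e1] by blast
  qed
  define Om where "Om = rg ` B"
  have Om: "openin X Om" "Om \<subseteq> G0" "Om \<noteq> {}" unfolding Om_def using rg_open[OF B(1)] BG B0(2) by auto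
  have nz: "\<forall>v\<in>Om. g v \<noteq> 0"
  proof
    fix v assume "v \<in> Om"
    hence v: "v \<in> rg ` B" unfolding Om_def .
    have vG: "v \<in> G0" "v \<in> G" using v BG by auto
    have b: "sec B v \<in> B" "rg (sec B v) = v" using sec_in[OF B(3) v] by auto
    hence bG: "sec B v \<in> G" using BG by auto
    have m: "mul v (sec B v) = sec B v" using b bG by (metis mul_rg)
    have "g v = \<nu> (sec B v) (iv (sec B v)) * f (sec B v)" using gform[of v] vG v m by simp
    moreover have "\<nu> (sec B v) (iv (sec B v)) \<noteq> 0" using bG by (intro nu_nz) auto
    ultimately show "g v \<noteq> 0" using Bsupp[OF b(1)] by simp
  qed
  have suppg: "\<forall>z\<in>G - G0. g z \<noteq> 0 \<longrightarrow> z \<in> \<Union>(V ` {..<n})"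
  proof (intro ballI impI)
    fix z assume z: "z \<in> G - G0" "g z \<noteq> 0"
    hence zz: "z \<in> G" "dm z \<in> rg ` B" "f (mul z (sec B (dm z))) \<noteq> 0" using gform[of z] by (auto split: if_splits)
    hence "(\<Sum>i<n. if mul z (sec B (dm z)) \<in> U i then c i else 0) \<noteq> 0" using rep(2) by simp
    then obtain i where "i < n" "(if mul z (sec B (dm z)) \<in> U i then c i else 0) \<noteq> 0"
      by (rule sum.not_neutral_contains_not_neutral) auto
    hence "i < n" "mul z (sec B (dm z)) \<in> U i" by (auto split: if_splits)
    thus "z \<in> \<Union>(V ` {..<n})" using zz unfolding V_def by auto
  qed
  define h' where "h' v = \<nu> (sec B v) (iv (sec B v)) * (\<Sum>i<n. if v \<in> rg ` (B \<inter> U i) then c i else 0)" for v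
  have "LCP h' Om"
    unfolding h'_def Om_def
  proof (rule LCP_bin[where F = "(*)"])
    show "LCP (\<lambda>v. \<nu> (sec B v) (iv (sec B v))) (rg ` B)" by (rule LCP_nu[OF B(1) B(3)])
    show "LCP (\<lambda>x. \<Sum>i<n. if x \<in> rg ` (B \<inter> U i) then c i else 0) (rg ` B)"
    proof (rule LCP_sum)
      fix i assume "i < n"
      hence "openin X (rg ` (B \<inter> U i))" using rg_open B(1) rep(1) cos_open by (simp add: openin_Int)
      thus "LCP (\<lambda>x. if x \<in> rg ` (B \<inter> U i) then c i else 0) (rg ` B)" by (rule LCP_ind)
    qed
  qed
  moreover have "h' v = g v" if "v \<in> Om" for v
  proof -
    have v: "v \<in> rg ` B" using that unfolding Om_def .
    have vG: "v \<in> G0" "v \<in> G" using v BG by auto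
    have b: "sec B v \<in> B" "rg (sec B v) = v" using sec_in[OF B(3) v] by auto
    hence bG: "sec B v \<in> G" using BG by auto
    have m: "mul v (sec B v) = sec B v" using b bG by (metis mul_rg)
    have gv: "g v = \<nu> (sec B v) (iv (sec B v)) * f (sec B v)" using gform[of v] vG v m by simp
    have "(sec B v \<in> U i) = (v \<in> rg ` (B \<inter> U i))" for i
    proof
      assume "sec B v \<in> U i" thus "v \<in> rg ` (B \<inter> U i)" using b by force
    next
      assume "v \<in> rg ` (B \<inter> U i)"
      then obtain b' where "b' \<in> B" "b' \<in> U i" "v = rg b'" by auto
      thus "sec B v \<in> U i" using sec[OF B(3)] by auto
    qed
    thus ?thesis unfolding gv h'_def rep(2) by simp
  qed
  ultimately have lc: "LCP g Om" by (rule LCP_cong)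
  have VV: "finite (V ` {..<n})" "\<forall>W\<in>V ` {..<n}. openin X W \<and> inj_on dm W" using Vopen Vinj by auto
  obtain K c0 where K: "compact_open_slice X \<Gamma> K" "openin X K" "compactin X K" "K \<subseteq> G0" "K \<noteq> {}" "c0 \<noteq> 0"
     "\<forall>z\<in>G. rg z \<in> K \<and> dm z \<in> K \<longrightarrow> g z = cchar c0 K z"
    using AKL[OF VV Om suppg nz lc] by blast
  show ?thesis
    by (rule exI[of _ B], rule exI[of _ K], rule exI[of _ c0]) (use K B0(1) in \<open>simp add: g_def\<close>)
qed

end

context SA begin

lemma cchar_unit_supp: "K \<subseteq> G0 \<Longrightarrow> cchar c K x \<noteq> 0 \<Longrightarrow> x \<in> G0"
  unfolding cchar_def by (auto split: if_splits)

lemma conv_unitR: assumes "K \<subseteq> G0"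
  shows "cv h (cchar a K) z = (if z \<in> G then h z * cchar a K (dm z) else 0)"
  by (rule conv_unit_right[OF cchar_unit_supp[OF assms]])

lemma conv_unitL: assumes "K \<subseteq> G0"
  shows "cv (cchar a K) h z = (if z \<in> G then cchar a K (rg z) * h z else 0)"
  by (rule conv_unit_left[OF cchar_unit_supp[OF assms]])

lemma cchar_mult: assumes "K \<subseteq> G0" "L \<subseteq> G0"
  shows "cv (cchar a K) (cchar b L) = cchar (a * b) (K \<inter> L)"
proof
  fix z
  show "cv (cchar a K) (cchar b L) z = cchar (a * b) (K \<inter> L) z"
    unfolding conv_unitL[OF assms(1)]
    using assms by (auto simp: cchar_def)
qed

lemma idem_lemma:
  assumes K: "K \<subseteq> G0"
    and E1: "\<And>z. h z \<noteq> 0 \<Longrightarrow> z \<in> G \<and> dm z \<in> K"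
    and E2: "\<And>z. z \<in> G \<Longrightarrow> rg z \<in> K \<Longrightarrow> h z = cchar 1 K z"
  shows "cv h h = h"
proof
  fix z
  let ?S = "{(a, b). (a, b) \<in> composable \<Gamma> \<and> mul a b = z \<and> h a \<noteq> 0 \<and> h b \<noteq> 0}"
  have S: "?S = (if h z \<noteq> 0 then {(z, dm z)} else {})"
  proof (rule set_eqI, clarify)
    fix a b
    show "((a, b) \<in> ?S) = ((a, b) \<in> (if h z \<noteq> 0 then {(z, dm z)} else {}))"
    proof
      assume ab: "(a, b) \<in> ?S"
      hence abG: "a \<in> G" "b \<in> G" "dm a = rg b" "mul a b = z" "h a \<noteq> 0" "h b \<noteq> 0"
        by (auto simp: composable_def)
      have "dm a \<in> K" using E1[OF abG(5)] by blast
      hence "rg b \<in> K" using abG by simp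
      hence "h b = cchar 1 K b" using E2[OF abG(2)] by blast
      hence "b \<in> K" using abG(6) unfolding cchar_def by (auto split: if_splits)
      hence b0: "b \<in> G0" using K by blast
      hence "mul a b = a" using abG by (metis mul_dm rg_unit)
      hence "a = z" using abG by simp
      moreover have "b = dm z" using b0 abG \<open>a = z\<close> by (metis rg_unit)
      ultimately show "(a, b) \<in> (if h z \<noteq> 0 then {(z, dm z)} else {})" using abG by simp
    next
      assume "(a, b) \<in> (if h z \<noteq> 0 then {(z, dm z)} else {})"
      hence ab: "h z \<noteq> 0" "a = z" "b = dm z" by (auto split: if_splits)
      have zG: "z \<in> G" "dm z \<in> K" using E1[OF ab(1)] by auto
      have "h (dm z) = 1" using E2[of "dm z"] zG K by (auto simp: cchar_def)
      thus "(a, b) \<in> ?S" using ab zG by (auto simp: composable_def)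
    qed
  qed
  have "h z \<noteq> 0 \<Longrightarrow> h (dm z) = 1"
  proof -
    assume "h z \<noteq> 0"
    hence zG: "z \<in> G" "dm z \<in> K" using E1 by auto
    thus "h (dm z) = 1" using E2[of "dm z"] K by (auto simp: cchar_def)
  qed
  moreover have "h z \<noteq> 0 \<Longrightarrow> z \<in> G" using E1 by blast
  ultimately show "cv h h z = h z" unfolding twisted_conv_def S by auto
qed


lemma transfer:
  assumes S: "SF e" "SF k" "SF q" "SF x0" "SF y0"
    and ee: "cv e e = e" and ek: "cv e k = e" and ke: "cv k e = k" and kk: "cv k k = k"
    and qq: "cv q q = q" and kq: "cv k q = q" and qk: "cv q k = q"
    and m1: "cv (cv k x0) q = x0" and m2: "cv (cv q y0) k = y0" and m3: "cv x0 y0 = k" and m4: "cv y0 x0 = q"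
    and ne: "q \<noteq> k"
  shows "cv (cv e q) (cv e q) = cv e q" "cv e (cv e q) = cv e q" "cv (cv e q) e = cv e q" "cv e q \<noteq> e"
   "cv (cv e (cv e x0)) (cv e q) = cv e x0" "cv (cv (cv e q) (cv e y0)) e = cv e y0"
   "cv (cv e x0) (cv e y0) = e" "cv (cv e y0) (cv e x0) = cv e q"
proof -
  note as = conv_assoc
  note sc = SF_conv
  have qe: "cv q e = q" by (metis as S(2,3) qk ke)
  have x0q: "cv x0 q = x0" by (metis as S(2,3,4) SF_conv m1 qq)
  have x0k: "cv x0 k = x0" by (metis as S(2,3,4) x0q qk)
  have x0e: "cv x0 e = x0" by (metis as S(2,4) x0k ke)
  have y0k: "cv y0 k = y0" by (metis as S(2,3,5) SF_conv m2 kk)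
  have y0e: "cv y0 e = y0" by (metis as S(2,5) y0k ke)
  have qy0: "cv q y0 = y0" by (metis as S(2,3,5) SF_conv m2 qq)
  show g1: "cv (cv e q) (cv e q) = cv e q"
  proof -
    have "cv (cv e q) (cv e q) = cv e (cv q (cv e q))" using as S sc by metis
    also have "cv q (cv e q) = cv (cv q e) q" using as S by metis
    finally show ?thesis using qe qq by simp
  qed
  show "cv e (cv e q) = cv e q" using as S ee by metis
  show "cv (cv e q) e = cv e q" using as S qe by metis
  show "cv e q \<noteq> e"
  proof
    assume h: "cv e q = e"
    have "cv k (cv e q) = cv (cv k e) q" using as S by metis
    hence "k = q" using h ke kq by simp
    thus False using ne by simp
  qed
  show "cv (cv e (cv e x0)) (cv e q) = cv e x0"
  proof -
    have "cv e (cv e x0) = cv e x0" using as S ee by metis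
    moreover have "cv (cv e x0) (cv e q) = cv e (cv x0 (cv e q))" using as S sc by metis
    moreover have "cv x0 (cv e q) = cv (cv x0 e) q" using as S by metis
    ultimately show ?thesis using x0e x0q by simp
  qed
  show "cv (cv (cv e q) (cv e y0)) e = cv e y0"
  proof -
    have "cv (cv e q) (cv e y0) = cv e (cv q (cv e y0))" using as S sc by metis
    moreover have "cv q (cv e y0) = cv (cv q e) y0" using as S by metis
    moreover have "cv (cv e y0) e = cv e (cv y0 e)" using as S by metis
    ultimately show ?thesis using qe qy0 y0e by simp
  qed
  show "cv (cv e x0) (cv e y0) = e"
  proof -
    have "cv (cv e x0) (cv e y0) = cv e (cv x0 (cv e y0))" using as S sc by metis
    moreover have "cv x0 (cv e y0) = cv (cv x0 e) y0" using as S by metis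
    ultimately show ?thesis using x0e m3 ek by simp
  qed
  show "cv (cv e y0) (cv e x0) = cv e q"
  proof -
    have "cv (cv e y0) (cv e x0) = cv e (cv y0 (cv e x0))" using as S sc by metis
    moreover have "cv y0 (cv e x0) = cv (cv y0 e) x0" using as S by metis
    ultimately show ?thesis using y0e m4 by simp
  qed
qed


lemma X0_lemma:
  assumes K: "K \<subseteq> G0" and c: "c \<noteq> 0"
    and key: "\<forall>z\<in>G. rg z \<in> K \<and> dm z \<in> K \<longrightarrow> g z = cchar c K z"
  defines "e \<equiv> cv (cv g (cchar 1 K)) (cchar (inverse c) K)"
  shows "\<And>z. e z \<noteq> 0 \<Longrightarrow> z \<in> G \<and> dm z \<in> K"
    and "\<And>z. z \<in> G \<Longrightarrow> rg z \<in> K \<Longrightarrow> e z = cchar 1 K z"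
proof -
  have ez: "e z = (if z \<in> G \<and> dm z \<in> K then g z * inverse c else 0)" for z
    unfolding e_def conv_unitR[OF K] by (auto simp: cchar_def)
  show "\<And>z. e z \<noteq> 0 \<Longrightarrow> z \<in> G \<and> dm z \<in> K" using ez by (metis)
  fix z assume z: "z \<in> G" "rg z \<in> K"
  show "e z = cchar 1 K z"
  proof (cases "dm z \<in> K")
    case True
    hence "g z = cchar c K z" using key z by blast
    thus ?thesis using ez[of z] z True c by (auto simp: cchar_def)
  next
    case False
    hence "z \<notin> K" using K by (metis dm_unit subsetD)
    thus ?thesis using ez[of z] False by (auto simp: cchar_def)
  qed
qed

lemma K_open_sub: "openin X K \<Longrightarrow> K \<subseteq> G0 \<Longrightarrow> openin (subtopology X G0) K"
  using openin_open_subtopology[OF G0_open] by blast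

lemma pinf:
  assumes I: "right_ideal A cv I" and fI: "f \<in> I" and fnz: "f \<noteq> (\<lambda>_. 0)"
    and suppH: "\<And>f. f \<in> A \<Longrightarrow> f \<noteq> (\<lambda>_. 0) \<Longrightarrow> X interior_of {x. f x \<noteq> 0} \<noteq> {}"
    and infH: "\<And>L. L \<subseteq> G0 \<Longrightarrow> L \<noteq> {} \<Longrightarrow> compactin X L \<Longrightarrow> openin (subtopology X G0) L \<Longrightarrow>
                  infinite_idempotent A cv (char_fun L)"
  shows "\<exists>p\<in>I. infinite_idempotent A cv p"
proof -
  have IA: "I \<subseteq> A" and Imul: "\<And>u a. u \<in> I \<Longrightarrow> a \<in> A \<Longrightarrow> cv u a \<in> I"
    using I unfolding right_ideal_def by auto
  have fA: "f \<in> A" using fI IA by blast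
  obtain B K c where BK: "compact_open_slice X \<Gamma> B" "compact_open_slice X \<Gamma> K" "openin X K" "compactin X K"
     "K \<subseteq> G0" "K \<noteq> {}" "c \<noteq> 0"
     "\<forall>z\<in>G. rg z \<in> K \<and> dm z \<in> K \<longrightarrow> cv f (cchar 1 (iv ` B)) z = cchar c K z"
    using key[OF fA suppH[OF fA fnz]] by blast
  define g where "g = cv f (cchar 1 (iv ` B))"
  define e where "e = cv (cv g (cchar 1 K)) (cchar (inverse c) K)"
  have gI: "g \<in> I" unfolding g_def by (rule Imul[OF fI cchar_A[OF iv_cos[OF BK(1)]]])
  have eI: "e \<in> I" unfolding e_def by (rule Imul[OF Imul[OF gI cchar_A[OF BK(2)]] cchar_A[OF BK(2)]])
  hence eA: "e \<in> A" using IA by blast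
  note E = X0_lemma[OF BK(5) BK(7) BK(8)[folded g_def], folded e_def]
  define k where "k = cchar (1::'k) K"
  have kA: "k \<in> A" unfolding k_def by (rule cchar_A[OF BK(2)])
  have ee: "cv e e = e" by (rule idem_lemma[OF BK(5) E])
  have ek: "cv e k = e"
  proof
    fix z show "cv e k z = e z" unfolding k_def conv_unitR[OF BK(5)]
      using E(1)[of z] by (auto simp: cchar_def)
  qed
  have ke: "cv k e = k"
  proof
    fix z
    have "z \<notin> G \<Longrightarrow> z \<notin> K" using BK(5) by auto
    moreover have "z \<in> K \<Longrightarrow> rg z \<in> K" using BK(5) by (metis rg_unit subsetD)
    ultimately show "cv k e z = k z" unfolding k_def conv_unitL[OF BK(5)]
      using E(2)[of z] by (auto simp: cchar_def)
  qed
  have kk: "cv k k = k" unfolding k_def using cchar_mult[OF BK(5) BK(5)] by simp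
  have "infinite_idempotent A cv (char_fun K)"
    using infH[OF BK(5) BK(6) BK(4) K_open_sub[OF BK(3) BK(5)]] .
  then obtain q x0 y0 where q: "q \<in> A" "cv q q = q" "cv k q = q" "cv q k = q" "q \<noteq> k"
     "x0 \<in> A" "y0 \<in> A" "cv (cv k x0) q = x0" "cv (cv q y0) k = y0" "cv x0 y0 = k" "cv y0 x0 = q"
    unfolding infinite_idempotent_def subidempotent_def idempotent_def mvn_equiv_def char_fun_cchar k_def
    by blast
  note T = transfer[OF A_SF[OF eA] A_SF[OF kA] A_SF[OF q(1)] A_SF[OF q(6)] A_SF[OF q(7)]
      ee ek ke kk q(2,3,4,8,9,10,11,5)]
  have eqI: "cv e q \<in> I" by (rule Imul[OF eI q(1)])
  have ex0I: "cv e x0 \<in> I" by (rule Imul[OF eI q(6)])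
  have ey0I: "cv e y0 \<in> I" by (rule Imul[OF eI q(7)])
  have mvn: "mvn_equiv A cv e (cv e q)" unfolding mvn_equiv_def
  proof (rule bexI[of _ "cv e x0"], rule bexI[of _ "cv e y0"])
    show "cv (cv e (cv e x0)) (cv e q) = cv e x0 \<and> cv (cv (cv e q) (cv e y0)) e = cv e y0 \<and>
      cv (cv e x0) (cv e y0) = e \<and> cv (cv e y0) (cv e x0) = cv e q" using T by blast
    show "cv e x0 \<in> A" "cv e y0 \<in> A" using ex0I ey0I IA by auto
  qed
  have "infinite_idempotent A cv e"
    unfolding infinite_idempotent_def subidempotent_def idempotent_def
    using mvn T eqI IA eA ee by blast
  thus ?thesis using eI by blast
qed


lemma ideal_unit:
  assumes I: "two_sided_ideal A cv I" and fI: "f \<in> I" and fnz: "f \<noteq> (\<lambda>_. 0)"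
    and suppH: "\<And>f. f \<in> A \<Longrightarrow> f \<noteq> (\<lambda>_. 0) \<Longrightarrow> X interior_of {x. f x \<noteq> 0} \<noteq> {}"
  shows "\<exists>K. openin X K \<and> compactin X K \<and> K \<subseteq> G0 \<and> K \<noteq> {} \<and> cchar 1 K \<in> I"
proof -
  have IA: "I \<subseteq> A" and Imul: "\<And>u a. u \<in> I \<Longrightarrow> a \<in> A \<Longrightarrow> cv u a \<in> I"
    and Imull: "\<And>u a. u \<in> I \<Longrightarrow> a \<in> A \<Longrightarrow> cv a u \<in> I"
    using I unfolding two_sided_ideal_def right_ideal_def by auto
  have fA: "f \<in> A" using fI IA by blast
  obtain B K c where BK: "compact_open_slice X \<Gamma> B" "compact_open_slice X \<Gamma> K" "openin X K" "compactin X K"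
     "K \<subseteq> G0" "K \<noteq> {}" "c \<noteq> 0"
     "\<forall>z\<in>G. rg z \<in> K \<and> dm z \<in> K \<longrightarrow> cv f (cchar 1 (iv ` B)) z = cchar c K z"
    using key[OF fA suppH[OF fA fnz]] by blast
  define g where "g = cv f (cchar 1 (iv ` B))"
  have gI: "g \<in> I" unfolding g_def by (rule Imul[OF fI cchar_A[OF iv_cos[OF BK(1)]]])
  define Y where "Y = cv (cchar 1 K) (cv g (cchar 1 K))"
  have YI: "Y \<in> I" unfolding Y_def by (rule Imull[OF Imul[OF gI cchar_A[OF BK(2)]] cchar_A[OF BK(2)]])
  have Y: "Y = cchar c K"
  proof
    fix z
    have "z \<in> K \<Longrightarrow> z \<in> G \<and> rg z = z \<and> dm z = z" using BK(5) by auto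
    thus "Y z = cchar c K z" unfolding Y_def conv_unitL[OF BK(5)] conv_unitR[OF BK(5)]
      using BK(8)[folded g_def, rule_format, of z] by (auto simp: cchar_def)
  qed
  have "cv Y (cchar (inverse c) K) \<in> I" by (rule Imul[OF YI cchar_A[OF BK(2)]])
  moreover have "cv Y (cchar (inverse c) K) = cchar 1 K"
    unfolding Y cchar_mult[OF BK(5) BK(5)] using BK(7) by simp
  ultimately show ?thesis using BK by auto
qed

lemma orbit_meets:
  assumes minimal: "minimal X \<Gamma>" and u: "u \<in> G0" and K: "openin X K" "K \<subseteq> G0" "K \<noteq> {}"
  shows "\<exists>a\<in>G. dm a = u \<and> rg a \<in> K"
proof -
  have cl: "(subtopology X G0) closure_of (orbit \<Gamma> u) = G0" using minimal u unfolding minimal_def by blast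
  have oK: "openin (subtopology X G0) K" by (rule K_open_sub[OF K(1,2)])
  have "K \<inter> (subtopology X G0) closure_of (orbit \<Gamma> u) \<noteq> {}" using cl K by auto
  hence "K \<inter> orbit \<Gamma> u \<noteq> {}" using openin_Int_closure_of_eq_empty[OF oK] by blast
  thus ?thesis unfolding orbit_def by blast
qed

lemma iv_iv_image: assumes "C \<subseteq> G" shows "iv ` (iv ` C) = C"
proof -
  have "iv ` (iv ` C) = (iv \<circ> iv) ` C" by (simp add: image_comp)
  also have "\<dots> = id ` C" using assms by (intro image_cong) auto
  finally show ?thesis by simp
qed

lemma unit_nbhd:
  assumes I: "two_sided_ideal A cv I" and minimal: "minimal X \<Gamma>"
    and K: "openin X K" "compactin X K" "K \<subseteq> G0" "K \<noteq> {}" "cchar 1 K \<in> I"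
    and u: "u \<in> G0"
  shows "\<exists>L. openin X L \<and> compactin X L \<and> L \<subseteq> G0 \<and> u \<in> L \<and> cchar 1 L \<in> I"
proof -
  have IA: "I \<subseteq> A" and Imul: "\<And>u a. u \<in> I \<Longrightarrow> a \<in> A \<Longrightarrow> cv u a \<in> I"
    and Imull: "\<And>u a. u \<in> I \<Longrightarrow> a \<in> A \<Longrightarrow> cv a u \<in> I"
    using I unfolding two_sided_ideal_def right_ideal_def by auto
  obtain a where a: "a \<in> G" "dm a = u" "rg a \<in> K" using orbit_meets[OF minimal u K(1,3,4)] by blast
  obtain W where W: "openin X W" "a \<in> W" "\<forall>b\<in>W. \<nu> (iv b) b = \<nu> (iv a) a"
    using nu_lc[OF pair_cont2 a(1)] by auto
  define c0 where "c0 = \<nu> (iv a) a"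
  have c0: "c0 \<noteq> 0" unfolding c0_def using a by (intro nu_nz) auto
  have "openin X (W \<inter> {b \<in> G. rg b \<in> K})" using W(1) preim_open[OF rg_cont K(1)] by (rule openin_Int)
  then obtain C where C: "compact_open_slice X \<Gamma> C" "a \<in> C" "C \<subseteq> W \<inter> {b \<in> G. rg b \<in> K}"
    using ample_basis a W by blast
  have CG: "C \<subseteq> G" using C by auto
  have Cinj: "inj_on dm C" "inj_on rg C" using C(1) cos_injd cos_injr by auto
  define B' where "B' = iv ` C"
  have B'cos: "compact_open_slice X \<Gamma> B'" unfolding B'_def by (rule iv_cos[OF C(1)])
  have B'G: "B' \<subseteq> G" "inj_on rg B'" using B'cos cos_injr openin_G cos_open by auto
  have B'C: "iv ` B' = C" unfolding B'_def by (rule iv_iv_image[OF CG])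
  define D where "D = dm ` C"
  have DG0: "D \<subseteq> G0" unfolding D_def using CG by auto
  have rB': "rg ` B' = D" unfolding B'_def D_def using CG by (force simp: image_iff)
  define P where "P = cv (cchar 1 B') (cchar 1 K)"
  have PI: "P \<in> I" unfolding P_def by (rule Imull[OF K(5) cchar_A[OF B'cos]])
  have P: "P = cchar 1 B'"
  proof
    fix z
    have "z \<in> B' \<Longrightarrow> z \<in> G \<and> dm z \<in> K" unfolding B'_def using C(3) by auto
    thus "P z = cchar 1 B' z" unfolding P_def conv_unitR[OF K(3)] by (auto simp: cchar_def)
  qed
  define H where "H = cv P (cchar 1 C)"
  have HI: "H \<in> I" unfolding H_def by (rule Imul[OF PI cchar_A[OF C(1)]])
  define R where "R = cv H (cchar (inverse c0) D)"
  have Dcos: "compact_open_slice X \<Gamma> D"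
    unfolding D_def using dm_open[OF cos_open[OF C(1)]] image_compactin[OF cos_compact[OF C(1)] dm_cont] DG0[unfolded D_def]
    by (intro unit_cos) auto
  have RI: "R \<in> I" unfolding R_def by (rule Imul[OF HI cchar_A[OF Dcos]])
  have Hform: "H z = (if z \<in> G \<and> dm z \<in> D then
      \<nu> (mul z (sec B' (dm z))) (iv (sec B' (dm z))) * cchar 1 B' (mul z (sec B' (dm z))) else 0)" for z
    unfolding H_def P B'C[symmetric] conv_slice_right[OF B'G] rB' ..
  have R: "R = cchar 1 D"
  proof
    fix z
    show "R z = cchar 1 D z"
    proof (cases "z \<in> G \<and> dm z \<in> D")
      case False
      have "z \<notin> D"
      proof
        assume "z \<in> D" hence "z \<in> G" "dm z = z" using DG0 by auto
        thus False using False \<open>z \<in> D\<close> by simp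
      qed
      thus ?thesis unfolding R_def conv_unitR[OF DG0] using False by (auto simp: cchar_def)
    next
      case True
      hence zG: "z \<in> G" "dm z \<in> D" by auto
      define s where "s = sec B' (dm z)"
      have s: "s \<in> B'" "rg s = dm z" using sec_in[OF B'G(2)] zG(2) rB' unfolding s_def by auto
      then obtain b where b: "b \<in> C" "s = iv b" unfolding B'_def by auto
      have bG: "b \<in> G" using b CG by auto
      have dmb: "dm b = dm z" using s(2) b(2) rg_iv[OF bG] by simp
      have Hz: "H z = \<nu> (mul z s) (iv s) * cchar 1 B' (mul z s)"
        using Hform[of z] zG unfolding s_def by simp
      have Rz: "R z = H z * inverse c0" unfolding R_def conv_unitR[OF DG0] using zG by (simp add: cchar_def)
      show ?thesis
      proof (cases "mul z s \<in> B'")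
        case True
        then obtain b' where b': "b' \<in> C" "mul z s = iv b'" unfolding B'_def by auto
        have b'G: "b' \<in> G" using b' CG by auto
        have sG: "s \<in> G" using b(2) bG by simp
        have e1: "dm z = rg s" using s(2) by simp
        have "dm (mul z s) = dm s" by (rule dm_mul[OF zG(1) sG e1])
        also have "\<dots> = rg b" using b(2) bG by simp
        finally have "rg b = dm (iv b')" using b'(2) by simp
        hence "rg b = rg b'" using b'G by simp
        hence bb: "b = b'" using inj_onD[OF Cinj(2) _ b(1) b'(1)] by blast
        have m0: "mul z (iv b) = iv b" using b'(2) b(2) bb by simp
        have m1: "mul (dm b) (iv b) = iv b" using mul_rg[OF iv_G[OF bG]] rg_iv[OF bG] by simp
        have "z = dm b"
          by (rule cancel_right[of z "dm b" "iv b"]) (use zG bG dmb m0 m1 in auto)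
        hence zD: "z \<in> D" unfolding D_def using b by auto
        have "H z = \<nu> (iv b) b" using Hz m0 b(2) True iv_iv[OF bG] by (simp add: cchar_def)
        hence "H z = c0" using W(3) C(3) b(1) unfolding c0_def by auto
        thus ?thesis using Rz c0 zD by (simp add: cchar_def)
      next
        case False
        have "z \<notin> D"
        proof
          assume "z \<in> D"
          then obtain b'' where b'': "b'' \<in> C" "z = dm b''" unfolding D_def by auto
          have b''G: "b'' \<in> G" using b'' CG by auto
          have ib: "iv b'' \<in> B'" using b''(1) unfolding B'_def by auto
          have "rg (iv b'') = dm z" using b''(2) b''G by simp
          hence "s = iv b''" using sec[OF B'G(2) ib] unfolding s_def by simp
          moreover have "mul (dm b'') (iv b'') = iv b''" using mul_rg[OF iv_G[OF b''G]] rg_iv[OF b''G] by simp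
          ultimately have "mul z s = iv b''" using b''(2) by simp
          thus False using False ib by simp
        qed
        have "H z = 0" using Hz False by (simp add: cchar_def)
        thus ?thesis using Rz \<open>z \<notin> D\<close> by (simp add: cchar_def)
      qed
    qed
  qed
  have "openin X D" "compactin X D" using Dcos cos_open cos_compact by auto
  moreover have "u \<in> D" unfolding D_def using a C(2) by auto
  ultimately show ?thesis using DG0 RI R by auto
qed


lemma unit_co_closed: "compactin X K \<Longrightarrow> K \<subseteq> G0 \<Longrightarrow> closedin (subtopology X G0) K"
  by (rule compactin_imp_closedin[OF units_H]) (simp add: compactin_subtopology)

lemma unit_co_diff:
  assumes L: "openin X L" "compactin X L" "L \<subseteq> G0" and K: "openin X K" "compactin X K" "K \<subseteq> G0"
  shows "openin X (L - K)" "compactin X (L - K)" "openin X (L \<inter> K)" "compactin X (L \<inter> K)"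
proof -
  let ?T = "subtopology X G0"
  have oL: "openin ?T L" and oK: "openin ?T K" using K_open_sub L K by auto
  have cL: "closedin ?T L" and cK: "closedin ?T K" using unit_co_closed L K by auto
  have kL: "compactin ?T L" using L by (simp add: compactin_subtopology)
  have "openin ?T (L - K)" using oL cK by blast
  thus "openin X (L - K)" using openin_trans_full G0_open by blast
  have "closedin ?T (L - K)" using cL oK by blast
  hence "compactin ?T (L - K)" using closed_compactin[OF kL] by blast
  thus "compactin X (L - K)" by (simp add: compactin_subtopology)
  show "openin X (L \<inter> K)" using L K by (simp add: openin_Int)
  have "closedin ?T (L \<inter> K)" using cL cK by blast
  hence "compactin ?T (L \<inter> K)" using closed_compactin[OF kL] by blast
  thus "compactin X (L \<inter> K)" by (simp add: compactin_subtopology)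
qed

lemma add_closed: assumes "additive_subgroup I" "u \<in> I" "v \<in> I" shows "(\<lambda>x. u x + v x) \<in> I"
proof -
  have z: "(\<lambda>_. 0) \<in> I" and d: "\<And>f g. f \<in> I \<Longrightarrow> g \<in> I \<Longrightarrow> (\<lambda>x. f x - g x) \<in> I"
    using assms(1) unfolding additive_subgroup_def by auto
  have "(\<lambda>x. 0 - v x) \<in> I" using d[OF z assms(3)] .
  hence "(\<lambda>x. u x - (0 - v x)) \<in> I" using d[OF assms(2)] by blast
  thus ?thesis by simp
qed

lemma cover_ind:
  assumes I: "right_ideal A cv I" and F: "finite F"
    and FI: "\<forall>K\<in>F. openin X K \<and> compactin X K \<and> K \<subseteq> G0 \<and> cchar 1 K \<in> I"
  shows "\<forall>L. openin X L \<and> compactin X L \<and> L \<subseteq> G0 \<and> L \<subseteq> \<Union>F \<longrightarrow> cchar 1 L \<in> I"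
  using F FI
proof (induction F rule: finite_induct)
  case empty
  have "(\<lambda>_. 0) \<in> I" using I unfolding right_ideal_def additive_subgroup_def by blast
  moreover have "cchar (1::'k) ({}::'g set) = (\<lambda>_. 0)" by (auto simp: cchar_def)
  ultimately have z: "cchar (1::'k) ({}::'g set) \<in> I" by simp
  show ?case
  proof (intro allI impI)
    fix L assume "openin X L \<and> compactin X L \<and> L \<subseteq> G0 \<and> L \<subseteq> \<Union>{}"
    hence "L = {}" by auto
    thus "cchar 1 L \<in> I" using z by simp
  qed
next
  case (insert K F)
  have AG: "additive_subgroup I" and Imul: "\<And>u a. u \<in> I \<Longrightarrow> a \<in> A \<Longrightarrow> cv u a \<in> I"
    using I unfolding right_ideal_def by auto
  have K: "openin X K" "compactin X K" "K \<subseteq> G0" "cchar 1 K \<in> I" using insert.prems by auto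
  show ?case
  proof (intro allI impI)
    fix L assume L: "openin X L \<and> compactin X L \<and> L \<subseteq> G0 \<and> L \<subseteq> \<Union>(insert K F)"
    note LK = unit_co_diff[OF conjunct1[OF L] conjunct1[OF conjunct2[OF L]] conjunct1[OF conjunct2[OF conjunct2[OF L]]] K(1,2,3)]
    have IH: "\<forall>L. openin X L \<and> compactin X L \<and> L \<subseteq> G0 \<and> L \<subseteq> \<Union>F \<longrightarrow> cchar 1 L \<in> I"
      using insert.IH insert.prems by simp
    have "L - K \<subseteq> \<Union>F" using L by blast
    moreover have "L - K \<subseteq> G0" using L by blast
    ultimately have "cchar 1 (L - K) \<in> I" using IH LK(1,2) by blast
    moreover have "cchar 1 (L \<inter> K) \<in> I"
    proof -
      have LKG: "L \<inter> K \<subseteq> G0" using K(3) by blast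
      have "cv (cchar 1 K) (cchar 1 (L \<inter> K)) \<in> I"
        by (rule Imul[OF K(4) cchar_A[OF unit_cos[OF LK(3,4) LKG]]])
      moreover have "K \<inter> (L \<inter> K) = L \<inter> K" by blast
      hence "cv (cchar 1 K) (cchar (1::'k) (L \<inter> K)) = cchar 1 (L \<inter> K)"
        using cchar_mult[OF K(3) LKG, of 1 1] by simp
      ultimately show ?thesis by simp
    qed
    ultimately have "(\<lambda>x. cchar 1 (L \<inter> K) x + cchar 1 (L - K) x) \<in> I" using add_closed[OF AG] by blast
    moreover have "(\<lambda>x. cchar (1::'k) (L \<inter> K) x + cchar 1 (L - K) x) = cchar 1 L"
      by (auto simp: cchar_def)
    ultimately show "cchar 1 L \<in> I" by simp
  qed
qed

lemma simple_part:
  assumes I: "two_sided_ideal A cv I" and minimal: "minimal X \<Gamma>"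
    and K: "openin X K" "compactin X K" "K \<subseteq> G0" "K \<noteq> {}" "cchar 1 K \<in> I"
  shows "A \<subseteq> I"
proof -
  have RI: "right_ideal A cv I" using I unfolding two_sided_ideal_def by blast
  have AG: "additive_subgroup I" using RI unfolding right_ideal_def by blast
  have Imull: "\<And>u a. u \<in> I \<Longrightarrow> a \<in> A \<Longrightarrow> cv a u \<in> I"
    using I unfolding two_sided_ideal_def by auto
  define F0 where "F0 = {L. openin X L \<and> compactin X L \<and> L \<subseteq> G0 \<and> cchar 1 L \<in> I}"
  have cov: "\<forall>u\<in>G0. \<exists>L\<in>F0. u \<in> L" unfolding F0_def using unit_nbhd[OF I minimal K] by blast
  have Ucase: "cchar c U \<in> I" if U: "compact_open_slice X \<Gamma> U" for U c
  proof -
    have UG: "U \<subseteq> G" using U cos_open openin_G by blast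
    define D where "D = dm ` U"
    have D: "openin X D" "compactin X D" "D \<subseteq> G0" unfolding D_def
      using dm_open[OF cos_open[OF U]] image_compactin[OF cos_compact[OF U] dm_cont] UG by auto
    have "D \<subseteq> \<Union>F0" using cov D(3) by blast
    moreover have "\<forall>L\<in>F0. openin X L" unfolding F0_def by blast
    ultimately obtain F where F: "finite F" "F \<subseteq> F0" "D \<subseteq> \<Union>F"
      using D(2) unfolding compactin_def by meson
    have "cchar 1 D \<in> I" using cover_ind[OF RI F(1)] F(2,3) D unfolding F0_def by blast
    hence "cv (cchar c U) (cchar 1 D) \<in> I" by (rule Imull[OF _ cchar_A[OF U]])
    moreover have "cv (cchar c U) (cchar (1::'k) D) = cchar c U"
    proof
      fix z show "cv (cchar c U) (cchar (1::'k) D) z = cchar c U z"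
        unfolding conv_unitR[OF D(3)] using UG unfolding D_def by (auto simp: cchar_def)
    qed
    ultimately show ?thesis by simp
  qed
  show "A \<subseteq> I"
  proof
    fix f assume "f \<in> A"
    then obtain n :: nat and c U where rep: "\<forall>i<n. compact_open_slice X \<Gamma> (U i)"
       "f = (\<lambda>x. \<Sum>i<n. if x \<in> U i then c i else 0)"
      unfolding steinberg_algebra_def by blast
    have "(\<lambda>x. \<Sum>i<m. if x \<in> U i then c i else 0) \<in> I" if "m \<le> n" for m
      using that
    proof (induction m)
      case 0
      thus ?case using AG unfolding additive_subgroup_def by simp
    next
      case (Suc m)
      have "cchar (c m) (U m) \<in> I" using Ucase rep(1) Suc.prems by simp
      hence "(\<lambda>x. (\<Sum>i<m. if x \<in> U i then c i else 0) + cchar (c m) (U m) x) \<in> I"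
        using add_closed[OF AG] Suc by simp
      thus ?case by (simp add: cchar_def)
    qed
    thus "f \<in> I" using rep(2) by blast
  qed
qed


lemma main:
  assumes minimal: "minimal X \<Gamma>" and nonempty: "G \<noteq> {}"
    and suppH: "\<And>f. f \<in> A \<Longrightarrow> f \<noteq> (\<lambda>_. 0) \<Longrightarrow> X interior_of {x. f x \<noteq> 0} \<noteq> {}"
    and infH: "\<And>L. L \<subseteq> G0 \<Longrightarrow> L \<noteq> {} \<Longrightarrow> compactin X L \<Longrightarrow> openin (subtopology X G0) L \<Longrightarrow>
                  infinite_idempotent A cv (char_fun L)"
  shows "simple_purely_infinite A cv"
  unfolding simple_purely_infinite_def simple_ring_def
proof (intro conjI allI impI)
  obtain x where "x \<in> G" using nonempty by blast
  hence "G0 \<noteq> {}" using dm_G0 by blast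
  then obtain K where K: "openin X K" "compactin X K" "K \<subseteq> G0" "K \<noteq> {}" "compact_open_slice X \<Gamma> K"
    using small_unit_cos[OF G0_open subset_refl] by blast
  have "cv (cchar 1 K) (cchar 1 K) = cchar (1::'k) K" using cchar_mult[OF K(3) K(3)] by simp
  moreover have "cchar (1::'k) K \<noteq> (\<lambda>_. 0)"
  proof
    assume "cchar (1::'k) K = (\<lambda>_. 0)"
    moreover obtain y where "y \<in> K" using K by blast
    ultimately show False by (metis cchar_def one_neq_zero)
  qed
  ultimately show "\<exists>a\<in>A. \<exists>b\<in>A. cv a b \<noteq> (\<lambda>_. 0)" using cchar_A[OF K(5)] by metis
next
  fix I assume I: "two_sided_ideal A cv I"
  show "I = {\<lambda>_. 0} \<or> I = A"
  proof (cases "I = {\<lambda>_. 0}")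
    case False
    have z: "(\<lambda>_. 0) \<in> I" using I unfolding two_sided_ideal_def right_ideal_def additive_subgroup_def by blast
    then obtain f where f: "f \<in> I" "f \<noteq> (\<lambda>_. 0)" using False by blast
    obtain K where "openin X K" "compactin X K" "K \<subseteq> G0" "K \<noteq> {}" "cchar 1 K \<in> I"
      using ideal_unit[OF I f suppH] by blast
    hence "A \<subseteq> I" using simple_part[OF I minimal] by blast
    moreover have "I \<subseteq> A" using I unfolding two_sided_ideal_def right_ideal_def by blast
    ultimately show ?thesis by blast
  qed simp
next
  fix I assume I: "right_ideal A cv I \<and> I \<noteq> {\<lambda>_. 0}"
  have z: "(\<lambda>_. 0) \<in> I" using I unfolding right_ideal_def additive_subgroup_def by blast
  then obtain f where f: "f \<in> I" "f \<noteq> (\<lambda>_. 0)" using I by blast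
  show "\<exists>p\<in>I. infinite_idempotent A cv p" using pinf[OF conjunct1[OF I] f suppH infH] .
qed

end

theorem proposition4p8:
  fixes X :: "'g topology" and \<Gamma> :: "'g groupoid" and \<nu> :: "'g \<Rightarrow> 'g \<Rightarrow> 'k::field"
  assumes ample: "ample_groupoid X \<Gamma>"
    and nonempty: "gcar \<Gamma> \<noteq> {}"
    and second_countable: "second_countable X"
    and units_Hausdorff: "Hausdorff_space (subtopology X (gunits \<Gamma>))"
    and cocycle: "continuous_2_cocycle X \<Gamma> \<nu>"
    and normalized: "normalized_cocycle \<Gamma> \<nu>"
    and effective: "effective X \<Gamma>"
    and minimal: "minimal X \<Gamma>"
    and supp: "\<And>f. f \<in> steinberg_algebra X \<Gamma> \<nu> \<Longrightarrow> f \<noteq> (\<lambda>_. 0) \<Longrightarrow>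
                  X interior_of {x. f x \<noteq> 0} \<noteq> {}"
    and inf: "\<And>L. L \<subseteq> gunits \<Gamma> \<Longrightarrow> L \<noteq> {} \<Longrightarrow> compactin X L \<Longrightarrow>
                  openin (subtopology X (gunits \<Gamma>)) L \<Longrightarrow>
                  infinite_idempotent (steinberg_algebra X \<Gamma> \<nu>) (twisted_conv \<Gamma> \<nu>) (char_fun L)"
  shows "simple_purely_infinite (steinberg_algebra X \<Gamma> \<nu>) (twisted_conv \<Gamma> \<nu>)"
proof -
  interpret SA X \<Gamma> \<nu>
    by (rule SA.intro[OF ample units_Hausdorff cocycle normalized effective])
  show ?thesis by (rule main[OF minimal nonempty supp inf])
qed

end
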